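(* Let $(G,X,\Gamma)$ be a $(\mu,\nu)$-path system group containing a $\delta$-constricting element $(g,A)$ with $\delta$-constricting map $\pi_A$, and let $\pi_{uA}$ ($u\in G$) be the translated maps described in the context. There exists $\theta\ge1$ such that: (I) for every $u\in G$, $\max\{\operatorname{diam}_{uA}(A),\operatorname{diam}_A(uA)\}>\theta$ if and only if $d_{Haus}(uA,A)\le\theta$; (II) $E(g,A)=\{u\in G: d_{Haus}(uA,A)\le\theta\}$; (III) $[E(g,A):\langle g\rangle]\le\theta$.
   Context: A path is a rectifiable continuous map $\alpha\colon[a,b]\to X$ parametrised by arc length; it is a $(\kappa,\lambda)$-quasi-geodesic if $d(\alpha(t),\alpha(t'))\le|t-t'|\le\kappa d(\alpha(t),\alpha(t'))+\lambda$. A $(\mu,\nu)$-path system group $(G,X,\Gamma)$ is a group $G$ acting properly by isometries on a geodesic metric space $X$ together with a $G$-invariant collection $\Gamma$ of paths closed under subpaths, such that any two points are joined by an element of $\Gamma$ and every element is a $(\mu,\nu)$-quasi-geodesic. A map $\pi_A\colon X\to A$ is $\delta$-constricting if (CS1) $d(x,\pi_A(x))\le\delta$ for $x\in A$, and (CS2) for all $x,y\in X$ and $\gamma\in\Gamma$ joining them, if $d(\pi_A(x),\pi_A(y))>\delta$ then $\gamma$ meets $B_X(\pi_A(x),\delta)$ and $B_X(\pi_A(y),\delta)$. An element $g$ is $\delta$-constricting, written $(g,A)$, if it has infinite order and $A$ is a $\langle g\rangle$-invariant subset admitting a $\delta$-constricting map $\pi_A$, on which $\langle g\rangle$ acts $\delta$-coboundedly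 (for all $a,a'\in A$ some $k\in\langle g\rangle$ has $d(a,ka')\le\delta$). Translated maps: fix a set $R$ of representatives of $G/\mathrm{Stab}(A)$; for $u\in G$ let $u_0\in R$ with $uA=u_0A$ and set $\pi_{uA}(x)=u_0\pi_A(u_0^{-1}x)$. $\operatorname{diam}_{B}(C)=\operatorname{diam}(\pi_B(C))$. $d_{Haus}$ is the Hausdorff distance. The elementary closure is $E(g,A)=\{u\in G: d_{Haus}(uA,A)<\infty\}$. *)

theory Defs
  imports "HOL-Analysis.Analysis" "HOL-Algebra.Coset" "HOL-Library.Extended_Real"
begin

text \<open>The space X is the whole of a metric-space type 'a.
  A path is a triple (a, b, alpha) standing for alpha restricted to [a,b].\<close>

type_synonym 'a path_t = "real \<times> real \<times> (real \<Rightarrow> 'a)"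

definition geodesic_space :: "'a::metric_space itself \<Rightarrow> bool" where
  "geodesic_space _ \<longleftrightarrow> (\<forall>x y::'a. \<exists>\<gamma>::real \<Rightarrow> 'a. \<gamma> 0 = x \<and> \<gamma> (dist x y) = y \<and>
      (\<forall>s\<in>{0..dist x y}. \<forall>t\<in>{0..dist x y}. dist (\<gamma> s) (\<gamma> t) = \<bar>s - t\<bar>))"

definition partitions :: "real \<Rightarrow> real \<Rightarrow> real list set" where
  "partitions s t = {ts. ts \<noteq> [] \<and> sorted ts \<and> hd ts = s \<and> last ts = t \<and> set ts \<subseteq> {s..t}}"

definition poly_length :: "(real \<Rightarrow> 'a::metric_space) \<Rightarrow> real list \<Rightarrow> real" where
  "poly_length \<alpha> ts = (\<Sum>i<length ts - 1. dist (\<alpha> (ts ! i)) (\<alpha> (ts ! Suc i)))"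

definition curve_length :: "(real \<Rightarrow> 'a::metric_space) \<Rightarrow> real \<Rightarrow> real \<Rightarrow> ereal" where
  "curve_length \<alpha> s t = (SUP ts\<in>partitions s t. ereal (poly_length \<alpha> ts))"

definition is_path :: "'a::metric_space path_t \<Rightarrow> bool" where
  "is_path p \<longleftrightarrow> (case p of (a, b, \<alpha>) \<Rightarrow> a \<le> b \<and> continuous_on {a..b} \<alpha> \<and>
      curve_length \<alpha> a b < \<infinity> \<and>
      (\<forall>s t. a \<le> s \<and> s \<le> t \<and> t \<le> b \<longrightarrow> curve_length \<alpha> s t = ereal (t - s)))"

definition quasi_geodesic :: "real \<Rightarrow> real \<Rightarrow> 'a::metric_space path_t \<Rightarrow> bool" where
  "quasi_geodesic \<kappa> lam p \<longleftrightarrow> is_path p \<and> (case p of (a, b, \<alpha>) \<Rightarrow>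
      (\<forall>t\<in>{a..b}. \<forall>t'\<in>{a..b}. dist (\<alpha> t) (\<alpha> t') \<le> \<bar>t - t'\<bar> \<and>
                                 \<bar>t - t'\<bar> \<le> \<kappa> * dist (\<alpha> t) (\<alpha> t') + lam))"

definition joins :: "'a path_t \<Rightarrow> 'a \<Rightarrow> 'a \<Rightarrow> bool" where
  "joins p x y \<longleftrightarrow> (case p of (a, b, \<alpha>) \<Rightarrow> \<alpha> a = x \<and> \<alpha> b = y)"

definition meets :: "'a path_t \<Rightarrow> 'a::metric_space set \<Rightarrow> bool" where
  "meets p B \<longleftrightarrow> (case p of (a, b, \<alpha>) \<Rightarrow> (\<exists>t\<in>{a..b}. \<alpha> t \<in> B))"

definition isometric_proper_action ::
  "('g, 'b) monoid_scheme \<Rightarrow> ('g \<Rightarrow> 'a::metric_space \<Rightarrow> 'a) \<Rightarrow> bool" where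
  "isometric_proper_action G act \<longleftrightarrow>
     (\<forall>x. act \<one>\<^bsub>G\<^esub> x = x) \<and>
     (\<forall>g\<in>carrier G. \<forall>h\<in>carrier G. \<forall>x. act (g \<otimes>\<^bsub>G\<^esub> h) x = act g (act h x)) \<and>
     (\<forall>g\<in>carrier G. \<forall>x y. dist (act g x) (act g y) = dist x y) \<and>
     (\<forall>x r. finite {g\<in>carrier G. dist x (act g x) \<le> r})"

definition path_system_group ::
  "real \<Rightarrow> real \<Rightarrow> ('g, 'b) monoid_scheme \<Rightarrow> ('g \<Rightarrow> 'a::metric_space \<Rightarrow> 'a) \<Rightarrow> 'a path_t set \<Rightarrow> bool" where
  "path_system_group \<mu> \<nu> G act \<Gamma> \<longleftrightarrow>
     group G \<and> geodesic_space TYPE('a) \<and> isometric_proper_action G act \<and>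
     (\<forall>g\<in>carrier G. \<forall>(a, b, \<alpha>)\<in>\<Gamma>. (a, b, act g \<circ> \<alpha>) \<in> \<Gamma>) \<and>
     (\<forall>(a, b, \<alpha>)\<in>\<Gamma>. \<forall>c d. a \<le> c \<and> c \<le> d \<and> d \<le> b \<longrightarrow> (c, d, \<alpha>) \<in> \<Gamma>) \<and>
     (\<forall>x y. \<exists>p\<in>\<Gamma>. joins p x y) \<and>
     (\<forall>p\<in>\<Gamma>. quasi_geodesic \<mu> \<nu> p)"

text \<open>Balls B_X(p, delta) are taken closed.\<close>
definition constricting_map ::
  "'a path_t set \<Rightarrow> real \<Rightarrow> 'a::metric_space set \<Rightarrow> ('a \<Rightarrow> 'a) \<Rightarrow> bool" where
  "constricting_map \<Gamma> \<delta> A \<pi> \<longleftrightarrow>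
     (\<forall>x. \<pi> x \<in> A) \<and>
     (\<forall>x\<in>A. dist x (\<pi> x) \<le> \<delta>) \<and>
     (\<forall>x y. \<forall>p\<in>\<Gamma>. joins p x y \<and> dist (\<pi> x) (\<pi> y) > \<delta> \<longrightarrow>
         meets p (cball (\<pi> x) \<delta>) \<and> meets p (cball (\<pi> y) \<delta>))"

definition cyclic_subgroup :: "('g, 'b) monoid_scheme \<Rightarrow> 'g \<Rightarrow> 'g set" where
  "cyclic_subgroup G g = {g [^]\<^bsub>G\<^esub> (k::int) | k. True}"

definition constricting_element ::
  "('g, 'b) monoid_scheme \<Rightarrow> ('g \<Rightarrow> 'a::metric_space \<Rightarrow> 'a) \<Rightarrow> 'a path_t set \<Rightarrow> real \<Rightarrow>
   'g \<Rightarrow> 'a set \<Rightarrow> ('a \<Rightarrow> 'a) \<Rightarrow> bool" where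
  "constricting_element G act \<Gamma> \<delta> g A \<pi> \<longleftrightarrow>
     g \<in> carrier G \<and> (\<forall>n::nat. n > 0 \<longrightarrow> g [^]\<^bsub>G\<^esub> n \<noteq> \<one>\<^bsub>G\<^esub>) \<and>
     (\<forall>k\<in>cyclic_subgroup G g. act k ` A = A) \<and>
     constricting_map \<Gamma> \<delta> A \<pi> \<and>
     (\<forall>a\<in>A. \<forall>a'\<in>A. \<exists>k\<in>cyclic_subgroup G g. dist a (act k a') \<le> \<delta>)"

text \<open>R is a set of representatives of G / Stab(A): each translate uA equals r A
  for a unique r in R.  The coset Stab(A) itself is represented by the identity.\<close>
definition representatives ::
  "('g, 'b) monoid_scheme \<Rightarrow> ('g \<Rightarrow> 'a \<Rightarrow> 'a) \<Rightarrow> 'a set \<Rightarrow> 'g set \<Rightarrow> bool" where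
  "representatives G act A R \<longleftrightarrow> R \<subseteq> carrier G \<and> \<one>\<^bsub>G\<^esub> \<in> R \<and>
     (\<forall>u\<in>carrier G. \<exists>!r. r \<in> R \<and> act r ` A = act u ` A)"

definition rep_of ::
  "('g, 'b) monoid_scheme \<Rightarrow> ('g \<Rightarrow> 'a \<Rightarrow> 'a) \<Rightarrow> 'a set \<Rightarrow> 'g set \<Rightarrow> 'g \<Rightarrow> 'g" where
  "rep_of G act A R u = (THE r. r \<in> R \<and> act r ` A = act u ` A)"

definition transl_map ::
  "('g, 'b) monoid_scheme \<Rightarrow> ('g \<Rightarrow> 'a \<Rightarrow> 'a) \<Rightarrow> 'a set \<Rightarrow> 'g set \<Rightarrow> ('a \<Rightarrow> 'a) \<Rightarrow> 'g \<Rightarrow> 'a \<Rightarrow> 'a" where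
  "transl_map G act A R \<pi> u x =
     (let u0 = rep_of G act A R u in act u0 (\<pi> (act (inv\<^bsub>G\<^esub> u0) x)))"

definition ediam :: "'a::metric_space set \<Rightarrow> ereal" where
  "ediam S = (SUP p\<in>S \<times> S. ereal (dist (fst p) (snd p)))"

definition ehausdist :: "'a::metric_space set \<Rightarrow> 'a set \<Rightarrow> ereal" where
  "ehausdist S T = max (SUP x\<in>S. ereal (infdist x T)) (SUP y\<in>T. ereal (infdist y S))"

definition elementary_closure ::
  "('g, 'b) monoid_scheme \<Rightarrow> ('g \<Rightarrow> 'a::metric_space \<Rightarrow> 'a) \<Rightarrow> 'a set \<Rightarrow> 'g set" where
  "elementary_closure G act A = {u\<in>carrier G. ehausdist (act u ` A) A < \<infinity>}"

definition index_le :: "('g, 'b) monoid_scheme \<Rightarrow> 'g set \<Rightarrow> 'g set \<Rightarrow> real \<Rightarrow> bool" where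
  "index_le G H K c \<longleftrightarrow> finite {u <#\<^bsub>G\<^esub> K | u. u \<in> H} \<and> real (card {u <#\<^bsub>G\<^esub> K | u. u \<in> H}) \<le> c"

end

theory Submission
  imports Defs
begin

locale PS =
  fixes G :: "('g, 'b) monoid_scheme"
    and act :: "'g \<Rightarrow> 'a::metric_space \<Rightarrow> 'a"
    and \<Gamma> :: "'a path_t set"
    and \<mu> \<nu> \<delta> :: real and g :: 'g and A :: "'a set" and \<pi> :: "'a \<Rightarrow> 'a"
  assumes psg: "path_system_group \<mu> \<nu> G act \<Gamma>"
    and ce: "constricting_element G act \<Gamma> \<delta> g A \<pi>"
begin

lemma grp: "group G" using psg by (simp add: path_system_group_def)

lemma act_one[simp]: "act \<one>\<^bsub>G\<^esub> x = x"
  using psg by (simp add: path_system_group_def isometric_proper_action_def)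

lemma act_mult: "u \<in> carrier G \<Longrightarrow> v \<in> carrier G \<Longrightarrow> act (u \<otimes>\<^bsub>G\<^esub> v) x = act u (act v x)"
  using psg by (simp add: path_system_group_def isometric_proper_action_def)

lemma act_iso[simp]: "u \<in> carrier G \<Longrightarrow> dist (act u x) (act u y) = dist x y"
  using psg by (simp add: path_system_group_def isometric_proper_action_def)

lemma proper: "finite {h\<in>carrier G. dist x (act h x) \<le> r}"
  using psg by (simp add: path_system_group_def isometric_proper_action_def)

lemma act_inv1[simp]: "u \<in> carrier G \<Longrightarrow> act (inv\<^bsub>G\<^esub> u) (act u x) = x"
  by (metis act_mult act_one grp group.inv_closed group.l_inv)

lemma act_inv2[simp]: "u \<in> carrier G \<Longrightarrow> act u (act (inv\<^bsub>G\<^esub> u) x) = x"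
  by (metis act_mult act_one grp group.inv_closed group.r_inv)

lemma \<Gamma>_act: "u \<in> carrier G \<Longrightarrow> (a, b, \<alpha>) \<in> \<Gamma> \<Longrightarrow> (a, b, act u \<circ> \<alpha>) \<in> \<Gamma>"
  using psg unfolding path_system_group_def by fast

lemma \<Gamma>_sub: "(a, b, \<alpha>) \<in> \<Gamma> \<Longrightarrow> a \<le> c \<Longrightarrow> c \<le> d \<Longrightarrow> d \<le> b \<Longrightarrow> (c, d, \<alpha>) \<in> \<Gamma>"
  using psg unfolding path_system_group_def by fast

lemma \<Gamma>_join: "\<exists>a b \<alpha>. (a, b, \<alpha>) \<in> \<Gamma> \<and> \<alpha> a = x \<and> \<alpha> b = y"
proof -
  obtain p where "p \<in> \<Gamma>" "joins p x y" using psg unfolding path_system_group_def by blast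
  then show ?thesis by (cases p) (auto simp: joins_def)
qed

lemma \<Gamma>_qg: assumes "(a, b, \<alpha>) \<in> \<Gamma>"
  shows "a \<le> b" "\<And>t t'. t \<in> {a..b} \<Longrightarrow> t' \<in> {a..b} \<Longrightarrow> dist (\<alpha> t) (\<alpha> t') \<le> \<bar>t - t'\<bar>"
    "\<And>t t'. t \<in> {a..b} \<Longrightarrow> t' \<in> {a..b} \<Longrightarrow> \<bar>t - t'\<bar> \<le> \<mu> * dist (\<alpha> t) (\<alpha> t') + \<nu>"
proof -
  have q: "quasi_geodesic \<mu> \<nu> (a, b, \<alpha>)" using psg assms unfolding path_system_group_def by blast
  then show "a \<le> b" by (simp add: quasi_geodesic_def is_path_def)
  fix t t' assume "t \<in> {a..b}" "t' \<in> {a..b}"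
  then show "dist (\<alpha> t) (\<alpha> t') \<le> \<bar>t - t'\<bar>" "\<bar>t - t'\<bar> \<le> \<mu> * dist (\<alpha> t) (\<alpha> t') + \<nu>"
    using q by (auto simp: quasi_geodesic_def)
qed

definition "MM = \<bar>\<mu>\<bar> + 1"
definition "NN = \<bar>\<nu>\<bar> + 1"

lemma MM_ge: "MM \<ge> 1" by (simp add: MM_def)
lemma NN_ge: "NN \<ge> 1" by (simp add: NN_def)

lemma qg_le: assumes "(a, b, \<alpha>) \<in> \<Gamma>" "t \<in> {a..b}" "t' \<in> {a..b}"
  shows "\<bar>t - t'\<bar> \<le> MM * dist (\<alpha> t) (\<alpha> t') + NN"
proof -
  have "\<mu> * dist (\<alpha> t) (\<alpha> t') \<le> MM * dist (\<alpha> t) (\<alpha> t')"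
    unfolding MM_def by (intro mult_right_mono) auto
  then show ?thesis using \<Gamma>_qg(3)[OF assms] unfolding NN_def by linarith
qed

lemma qg_ge: assumes "(a, b, \<alpha>) \<in> \<Gamma>" "t \<in> {a..b}" "t' \<in> {a..b}"
  shows "dist (\<alpha> t) (\<alpha> t') \<le> \<bar>t - t'\<bar>"
  using \<Gamma>_qg(2)[OF assms] .

lemma path_pt: assumes "(a, b, \<alpha>) \<in> \<Gamma>" "t \<in> {a..b}"
  shows "dist (\<alpha> a) (\<alpha> t) \<le> MM * dist (\<alpha> a) (\<alpha> b) + NN"
    "dist (\<alpha> t) (\<alpha> b) \<le> MM * dist (\<alpha> a) (\<alpha> b) + NN"
proof -
  have ab: "a \<le> b" using \<Gamma>_qg(1)[OF assms(1)] .
  have "\<bar>a - b\<bar> \<le> MM * dist (\<alpha> a) (\<alpha> b) + NN" using qg_le[OF assms(1), of a b] ab by auto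
  moreover have "dist (\<alpha> a) (\<alpha> t) \<le> \<bar>a - t\<bar>" using qg_ge[OF assms(1), of a t] assms(2) ab by auto
  moreover have "dist (\<alpha> t) (\<alpha> b) \<le> \<bar>t - b\<bar>" using qg_ge[OF assms(1), of t b] assms(2) ab by auto
  ultimately show "dist (\<alpha> a) (\<alpha> t) \<le> MM * dist (\<alpha> a) (\<alpha> b) + NN"
    "dist (\<alpha> t) (\<alpha> b) \<le> MM * dist (\<alpha> a) (\<alpha> b) + NN" using assms(2) by auto
qed

definition cstr :: "'a set \<Rightarrow> ('a \<Rightarrow> 'a) \<Rightarrow> bool" where
  "cstr S \<rho> \<longleftrightarrow> (\<forall>x. \<rho> x \<in> S) \<and> (\<forall>x\<in>S. dist x (\<rho> x) \<le> \<delta>) \<and>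
    (\<forall>a b \<alpha>. (a, b, \<alpha>) \<in> \<Gamma> \<and> dist (\<rho> (\<alpha> a)) (\<rho> (\<alpha> b)) > \<delta> \<longrightarrow>
       (\<exists>t\<in>{a..b}. dist (\<alpha> t) (\<rho> (\<alpha> a)) \<le> \<delta>) \<and> (\<exists>t\<in>{a..b}. dist (\<alpha> t) (\<rho> (\<alpha> b)) \<le> \<delta>))"

lemma cstr_A: "cstr A \<pi>"
proof -
  have cm: "constricting_map \<Gamma> \<delta> A \<pi>" using ce by (simp add: constricting_element_def)
  show ?thesis unfolding cstr_def
  proof (intro conjI allI impI)
    fix a b \<alpha> assume h: "(a, b, \<alpha>) \<in> \<Gamma> \<and> \<delta> < dist (\<pi> (\<alpha> a)) (\<pi> (\<alpha> b))"
    then have "meets (a, b, \<alpha>) (cball (\<pi> (\<alpha> a)) \<delta>) \<and> meets (a, b, \<alpha>) (cball (\<pi> (\<alpha> b)) \<delta>)"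
      using cm unfolding constricting_map_def joins_def by fastforce
    then show "(\<exists>t\<in>{a..b}. dist (\<alpha> t) (\<pi> (\<alpha> a)) \<le> \<delta>)" "(\<exists>t\<in>{a..b}. dist (\<alpha> t) (\<pi> (\<alpha> b)) \<le> \<delta>)"
      by (auto simp: meets_def dist_commute)
  qed (use cm in \<open>auto simp: constricting_map_def\<close>)
qed

lemma cstr_u: assumes u: "u \<in> carrier G"
  shows "cstr (act u ` A) (\<lambda>x. act u (\<pi> (act (inv\<^bsub>G\<^esub> u) x)))"
proof -
  have c: "cstr A \<pi>" by (rule cstr_A)
  have iu: "inv\<^bsub>G\<^esub> u \<in> carrier G" using u grp by (simp add: group.inv_closed)
  show ?thesis unfolding cstr_def
  proof (intro conjI allI impI ballI)
    fix x show "act u (\<pi> (act (inv\<^bsub>G\<^esub> u) x)) \<in> act u ` A" using c by (auto simp: cstr_def)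
  next
    fix x assume "x \<in> act u ` A"
    then obtain y where y: "y \<in> A" "x = act u y" by auto
    then show "dist x (act u (\<pi> (act (inv\<^bsub>G\<^esub> u) x))) \<le> \<delta>" using c u by (auto simp: cstr_def)
  next
    fix a b \<alpha> assume h: "(a, b, \<alpha>) \<in> \<Gamma> \<and> \<delta> < dist (act u (\<pi> (act (inv\<^bsub>G\<^esub> u) (\<alpha> a)))) (act u (\<pi> (act (inv\<^bsub>G\<^esub> u) (\<alpha> b))))"
    have p: "(a, b, act (inv\<^bsub>G\<^esub> u) \<circ> \<alpha>) \<in> \<Gamma>" using \<Gamma>_act[OF iu] h by blast
    have "\<delta> < dist (\<pi> ((act (inv\<^bsub>G\<^esub> u) \<circ> \<alpha>) a)) (\<pi> ((act (inv\<^bsub>G\<^esub> u) \<circ> \<alpha>) b))" using h u by simp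
    with c p have "(\<exists>t\<in>{a..b}. dist ((act (inv\<^bsub>G\<^esub> u) \<circ> \<alpha>) t) (\<pi> ((act (inv\<^bsub>G\<^esub> u) \<circ> \<alpha>) a)) \<le> \<delta>) \<and>
       (\<exists>t\<in>{a..b}. dist ((act (inv\<^bsub>G\<^esub> u) \<circ> \<alpha>) t) (\<pi> ((act (inv\<^bsub>G\<^esub> u) \<circ> \<alpha>) b)) \<le> \<delta>)"
      unfolding cstr_def by blast
    moreover have "\<And>z w. dist (act (inv\<^bsub>G\<^esub> u) z) w = dist z (act u w)"
      by (metis act_inv2 act_iso u)
    ultimately show "(\<exists>t\<in>{a..b}. dist (\<alpha> t) (act u (\<pi> (act (inv\<^bsub>G\<^esub> u) (\<alpha> a)))) \<le> \<delta>)"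
      "(\<exists>t\<in>{a..b}. dist (\<alpha> t) (act u (\<pi> (act (inv\<^bsub>G\<^esub> u) (\<alpha> b)))) \<le> \<delta>)" by auto
  qed
qed

end


context PS begin

lemma cstr_delta: "cstr S \<rho> \<Longrightarrow> 0 \<le> \<delta>"
  unfolding cstr_def by (metis dist_commute zero_le_dist order_trans)

lemma cstr_in: "cstr S \<rho> \<Longrightarrow> \<rho> x \<in> S" unfolding cstr_def by blast
lemma cstr_id: "cstr S \<rho> \<Longrightarrow> x \<in> S \<Longrightarrow> dist x (\<rho> x) \<le> \<delta>" unfolding cstr_def by blast
lemma cstr_cs2: "cstr S \<rho> \<Longrightarrow> (a, b, \<alpha>) \<in> \<Gamma> \<Longrightarrow> dist (\<rho> (\<alpha> a)) (\<rho> (\<alpha> b)) > \<delta> \<Longrightarrow>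
       (\<exists>t\<in>{a..b}. dist (\<alpha> t) (\<rho> (\<alpha> a)) \<le> \<delta>) \<and> (\<exists>t\<in>{a..b}. dist (\<alpha> t) (\<rho> (\<alpha> b)) \<le> \<delta>)"
  unfolding cstr_def by blast

lemma cstr_near: assumes c: "cstr S \<rho>" and s: "s \<in> S" and d: "dist x s \<le> r"
  shows "dist x (\<rho> x) \<le> MM * r + NN + 2 * \<delta>"
proof -
  have d0: "0 \<le> \<delta>" using cstr_delta[OF c] .
  have r0: "0 \<le> r" using d zero_le_dist order_trans by blast
  have Mr: "r \<le> MM * r" using MM_ge r0 by (simp add: mult_le_cancel_right1)
  have Mr2: "MM * dist x s \<le> MM * r" using MM_ge d by (simp add: mult_left_mono)
  obtain a b \<alpha> where p: "(a, b, \<alpha>) \<in> \<Gamma>" "\<alpha> a = x" "\<alpha> b = s" using \<Gamma>_join by blast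
  show ?thesis
  proof (cases "dist (\<rho> x) (\<rho> s) > \<delta>")
    case True
    then obtain t where t: "t \<in> {a..b}" "dist (\<alpha> t) (\<rho> x) \<le> \<delta>" using cstr_cs2[OF c p(1)] p by auto
    have "dist x (\<alpha> t) \<le> MM * dist x s + NN" using path_pt(1)[OF p(1) t(1)] p by simp
    then show ?thesis using t(2) dist_triangle[of x "\<rho> x" "\<alpha> t"] Mr2 d0 by linarith
  next
    case False
    have "dist x (\<rho> x) \<le> dist x s + dist s (\<rho> s) + dist (\<rho> s) (\<rho> x)"
      using dist_triangle[of x "\<rho> x" s] dist_triangle[of s "\<rho> x" "\<rho> s"] by linarith
    moreover have "dist s (\<rho> s) \<le> \<delta>" using cstr_id[OF c s] .
    ultimately show ?thesis using False d Mr NN_ge d0 by (simp add: dist_commute)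
  qed
qed

lemma cstr_cont: assumes c: "cstr S \<rho>" and d: "dist x y \<le> 1"
  shows "dist (\<rho> x) (\<rho> y) \<le> 2 * \<delta> + 2 * MM + 2 * NN + 1"
proof -
  have d0: "0 \<le> \<delta>" using cstr_delta[OF c] .
  obtain a b \<alpha> where p: "(a, b, \<alpha>) \<in> \<Gamma>" "\<alpha> a = x" "\<alpha> b = y" using \<Gamma>_join by blast
  have Md: "MM * dist x y \<le> MM" using MM_ge d by (simp add: mult_le_cancel_left1)
  show ?thesis
  proof (cases "dist (\<rho> x) (\<rho> y) > \<delta>")
    case True
    then obtain t t' where t: "t \<in> {a..b}" "dist (\<alpha> t) (\<rho> x) \<le> \<delta>" "t' \<in> {a..b}" "dist (\<alpha> t') (\<rho> y) \<le> \<delta>"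
      using cstr_cs2[OF c p(1)] p by auto
    have "dist x (\<alpha> t) \<le> MM * dist x y + NN" using path_pt(1)[OF p(1) t(1)] p by simp
    moreover have "dist (\<alpha> t') y \<le> MM * dist x y + NN" using path_pt(2)[OF p(1) t(3)] p by simp
    moreover have "dist (\<rho> x) (\<rho> y) \<le> dist (\<rho> x) (\<alpha> t) + dist (\<alpha> t) x + dist x y + dist y (\<alpha> t') + dist (\<alpha> t') (\<rho> y)"
      by (smt (verit) dist_triangle)
    ultimately show ?thesis using t Md d by (simp add: dist_commute)
  qed (use d0 MM_ge NN_ge in auto)
qed

definition "EE r = MM * r + NN + 2 * \<delta>"
definition "KK r = MM * (2 * EE r + 2 * \<delta>) + NN + EE r + 2 * MM * \<delta> + NN + \<delta>"

lemma morse: assumes c: "cstr S \<rho>" and p: "(a, b, \<alpha>) \<in> \<Gamma>"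
    and s1: "s1 \<in> S" "dist (\<alpha> a) s1 \<le> r" and s2: "s2 \<in> S" "dist (\<alpha> b) s2 \<le> r"
    and t: "t \<in> {a..b}"
  shows "\<exists>s\<in>S. dist (\<alpha> t) s \<le> KK r"
proof -
  have d0: "0 \<le> \<delta>" using cstr_delta[OF c] .
  have r0: "0 \<le> r" using s1 zero_le_dist order_trans by blast
  have E0: "0 \<le> EE r" unfolding EE_def using MM_ge NN_ge r0 d0 by simp
  have M0: "0 \<le> MM" using MM_ge by simp
  define x y z where "x = \<alpha> a" "y = \<alpha> b" "z = \<alpha> t"
  have Ex: "dist x (\<rho> x) \<le> EE r" unfolding EE_def x_y_z_def using cstr_near[OF c s1] .
  have Ey: "dist y (\<rho> y) \<le> EE r" unfolding EE_def x_y_z_def using cstr_near[OF c s2] .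
  have pa: "(a, t, \<alpha>) \<in> \<Gamma>" using \<Gamma>_sub[OF p] t by auto
  have pb: "(t, b, \<alpha>) \<in> \<Gamma>" using \<Gamma>_sub[OF p] t by auto
  have K1: "MM * (2 * EE r + 2 * \<delta>) + NN + EE r \<le> KK r" unfolding KK_def using M0 d0 NN_ge by simp
  have K2: "MM * (EE r + 2 * \<delta>) + NN + EE r \<le> KK r"
  proof -
    have "MM * (EE r + 2 * \<delta>) \<le> MM * (2 * EE r + 2 * \<delta>)" using M0 E0 by (simp add: mult_left_mono)
    then show ?thesis using K1 by linarith
  qed
  have K3: "2 * MM * \<delta> + NN + \<delta> \<le> KK r" unfolding KK_def using M0 d0 NN_ge E0
    by (simp add: zero_le_mult_iff)
  show ?thesis
  proof (cases "dist (\<rho> x) (\<rho> z) > \<delta>")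
    case xz: True
    show ?thesis
    proof (cases "dist (\<rho> z) (\<rho> y) > \<delta>")
      case zy: True
      obtain t1 where t1: "t1 \<in> {a..t}" "dist (\<alpha> t1) (\<rho> z) \<le> \<delta>"
        using cstr_cs2[OF c pa] xz unfolding x_y_z_def by blast
      obtain t2 where t2: "t2 \<in> {t..b}" "dist (\<alpha> t2) (\<rho> z) \<le> \<delta>"
        using cstr_cs2[OF c pb] zy unfolding x_y_z_def by blast
      have "dist (\<alpha> t1) (\<alpha> t2) \<le> 2 * \<delta>" using t1 t2 dist_triangle3[of "\<alpha> t1" "\<alpha> t2" "\<rho> z"] by (simp add: dist_commute)
      then have "\<bar>t1 - t2\<bar> \<le> MM * (2 * \<delta>) + NN"
        using qg_le[OF p, of t1 t2] t1 t2 t M0 mult_left_mono[of _ "2 * \<delta>" MM] by (smt (verit) atLeastAtMost_iff)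
      moreover have "dist z (\<alpha> t1) \<le> \<bar>t - t1\<bar>" using qg_ge[OF p, of t t1] t t1 unfolding x_y_z_def by auto
      ultimately have "dist z (\<alpha> t1) \<le> MM * (2 * \<delta>) + NN" using t1 t2 by auto
      then have "dist z (\<rho> z) \<le> 2 * MM * \<delta> + NN + \<delta>"
        using t1(2) dist_triangle[of z "\<rho> z" "\<alpha> t1"] by (simp add: dist_commute)
      then show ?thesis using K3 cstr_in[OF c] unfolding x_y_z_def by (meson order_trans)
    next
      case zy: False
      obtain t1 where t1: "t1 \<in> {a..t}" "dist (\<alpha> t1) (\<rho> z) \<le> \<delta>"
        using cstr_cs2[OF c pa] xz unfolding x_y_z_def by blast
      have "dist (\<alpha> t1) y \<le> EE r + 2 * \<delta>"
        using t1(2) zy Ey dist_triangle[of "\<alpha> t1" y "\<rho> z"] dist_triangle[of "\<rho> z" y "\<rho> y"]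
        by (simp add: dist_commute)
      moreover have pt: "(t1, b, \<alpha>) \<in> \<Gamma>" using \<Gamma>_sub[OF p] t1 t by auto
      ultimately have "dist z y \<le> MM * (EE r + 2 * \<delta>) + NN"
        using path_pt(2)[OF pt, of t] t1 t M0 mult_left_mono[of _ "EE r + 2 * \<delta>" MM]
        unfolding x_y_z_def by (smt (verit) atLeastAtMost_iff)
      then have "dist z (\<rho> y) \<le> MM * (EE r + 2 * \<delta>) + NN + EE r"
        using Ey dist_triangle[of z "\<rho> y" y] by linarith
      then show ?thesis using K2 cstr_in[OF c] unfolding x_y_z_def by (meson order_trans)
    qed
  next
    case xz: False
    show ?thesis
    proof (cases "dist (\<rho> z) (\<rho> y) > \<delta>")
      case zy: True
      obtain t2 where t2: "t2 \<in> {t..b}" "dist (\<alpha> t2) (\<rho> z) \<le> \<delta>"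
        using cstr_cs2[OF c pb] zy unfolding x_y_z_def by blast
      have "dist x (\<alpha> t2) \<le> EE r + 2 * \<delta>"
        using t2(2) xz Ex dist_triangle[of x "\<alpha> t2" "\<rho> z"] dist_triangle[of x "\<rho> z" "\<rho> x"]
        by (simp add: dist_commute)
      moreover have pt: "(a, t2, \<alpha>) \<in> \<Gamma>" using \<Gamma>_sub[OF p] t2 t by auto
      ultimately have "dist x z \<le> MM * (EE r + 2 * \<delta>) + NN"
        using path_pt(1)[OF pt, of t] t2 t M0 mult_left_mono[of _ "EE r + 2 * \<delta>" MM]
        unfolding x_y_z_def by (smt (verit) atLeastAtMost_iff)
      then have "dist z (\<rho> x) \<le> MM * (EE r + 2 * \<delta>) + NN + EE r"
        using Ex dist_triangle[of z "\<rho> x" x] by (simp add: dist_commute)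
      then show ?thesis using K2 cstr_in[OF c] unfolding x_y_z_def by (meson order_trans)
    next
      case zy: False
      have "dist x y \<le> 2 * EE r + 2 * \<delta>"
        using xz zy Ex Ey dist_triangle[of x y "\<rho> x"] dist_triangle[of "\<rho> x" y "\<rho> z"]
          dist_triangle[of "\<rho> z" y "\<rho> y"] by (simp add: dist_commute)
      then have "dist x z \<le> MM * (2 * EE r + 2 * \<delta>) + NN"
        using path_pt(1)[OF p t] M0 mult_left_mono[of _ "2 * EE r + 2 * \<delta>" MM]
        unfolding x_y_z_def by (smt (verit))
      then have "dist z (\<rho> x) \<le> MM * (2 * EE r + 2 * \<delta>) + NN + EE r"
        using Ex dist_triangle[of z "\<rho> x" x] by (simp add: dist_commute)
      then show ?thesis using K1 cstr_in[OF c] unfolding x_y_z_def by (meson order_trans)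
    qed
  qed
qed

end


lemma (in group) conj_pow_nat:
  assumes x: "x \<in> carrier G" and y: "y \<in> carrier G" and u: "u \<in> carrier G" and e: "u \<otimes> x = y \<otimes> u"
  shows "u \<otimes> x [^] (n::nat) = y [^] n \<otimes> u"
proof (induction n)
  case (Suc n)
  have "u \<otimes> x [^] Suc n = (u \<otimes> x [^] n) \<otimes> x" using x u by (simp add: m_assoc)
  also have "\<dots> = y [^] n \<otimes> (u \<otimes> x)" using Suc x y u by (simp add: m_assoc)
  also have "\<dots> = (y [^] n \<otimes> y) \<otimes> u" using e x y u by (simp add: m_assoc)
  also have "\<dots> = y [^] Suc n \<otimes> u" using y by simp
  finally show ?case .
qed (use u in simp)

lemma (in group) conj_inv:
  assumes x: "x \<in> carrier G" and y: "y \<in> carrier G" and u: "u \<in> carrier G" and e: "u \<otimes> x = y \<otimes> u"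
  shows "u \<otimes> inv x = inv y \<otimes> u"
proof -
  have "inv y \<otimes> u = inv y \<otimes> (u \<otimes> x) \<otimes> inv x" using x y u by (simp add: m_assoc)
  also have "\<dots> = u \<otimes> inv x" using e x y u by (simp add: m_assoc[symmetric])
  finally show ?thesis by simp
qed

lemma (in group) conj_pow:
  assumes x: "x \<in> carrier G" and y: "y \<in> carrier G" and u: "u \<in> carrier G" and e: "u \<otimes> x = y \<otimes> u"
  shows "u \<otimes> x [^] (k::int) = y [^] k \<otimes> u"
proof (cases "k \<ge> 0")
  case True
  then show ?thesis using conj_pow_nat[OF assms, of "nat k"] pow_nat[OF True] by metis
next
  case False
  then have k: "k = - int (nat (-k))" by simp
  have "u \<otimes> x [^] (nat (-k)) = y [^] (nat (-k)) \<otimes> u" by (rule conj_pow_nat[OF assms])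
  then have "u \<otimes> inv (x [^] (nat (-k))) = inv (y [^] (nat (-k))) \<otimes> u"
    using x y u by (intro conj_inv) auto
  moreover have "x [^] k = inv (x [^] (nat (-k)))" using x int_pow_neg_int[of x "nat (-k)"] k by metis
  moreover have "y [^] k = inv (y [^] (nat (-k)))" using y int_pow_neg_int[of y "nat (-k)"] k by metis
  ultimately show ?thesis by simp
qed



context PS begin

lemmas ce' = ce[unfolded constricting_element_def]
lemma g_carr[simp]: "g \<in> carrier G" using ce' by (rule conjunct1)
lemma ce2: "\<forall>n::nat. n > 0 \<longrightarrow> g [^]\<^bsub>G\<^esub> n \<noteq> \<one>\<^bsub>G\<^esub>" using ce'[THEN conjunct2, THEN conjunct1] .
lemma ce3: "\<forall>k\<in>cyclic_subgroup G g. act k ` A = A" using ce'[THEN conjunct2, THEN conjunct2, THEN conjunct1] .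
lemma ce5: "\<forall>a\<in>A. \<forall>a'\<in>A. \<exists>k\<in>cyclic_subgroup G g. dist a (act k a') \<le> \<delta>"
  using ce'[THEN conjunct2, THEN conjunct2, THEN conjunct2, THEN conjunct2] .

lemma gp_carr[simp]: "g [^]\<^bsub>G\<^esub> (i::int) \<in> carrier G"
  using grp by (simp add: group.int_pow_closed)

lemma gp_add: "g [^]\<^bsub>G\<^esub> (i::int) \<otimes>\<^bsub>G\<^esub> g [^]\<^bsub>G\<^esub> (j::int) = g [^]\<^bsub>G\<^esub> (i + j)"
  using grp by (simp add: group.int_pow_mult)

lemma inforder: assumes "g [^]\<^bsub>G\<^esub> (i::int) = \<one>\<^bsub>G\<^esub>" shows "i = 0"
proof (rule ccontr)
  assume i: "i \<noteq> 0"
  show False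
  proof (cases "i > 0")
    case True
    have "g [^]\<^bsub>G\<^esub> (nat i) = g [^]\<^bsub>G\<^esub> i" by (rule pow_nat) (use True in linarith)
    then have "g [^]\<^bsub>G\<^esub> (nat i) = \<one>\<^bsub>G\<^esub>" using assms by (rule trans)
    moreover have "nat i > 0" using True by linarith
    ultimately show False using ce2 by blast
  next
    case False
    then have ii: "i = - int (nat (-i))" by linarith
    have "g [^]\<^bsub>G\<^esub> (- int (nat (-i))) = inv\<^bsub>G\<^esub> (g [^]\<^bsub>G\<^esub> (nat (-i)))"
      by (rule group.int_pow_neg_int[OF grp g_carr])
    then have e1: "inv\<^bsub>G\<^esub> (g [^]\<^bsub>G\<^esub> (nat (-i))) = \<one>\<^bsub>G\<^esub>" using assms ii by metis
    have c: "g [^]\<^bsub>G\<^esub> (nat (-i)) \<in> carrier G"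
      by (rule monoid.nat_pow_closed[OF group.is_monoid[OF grp] g_carr])
    have "g [^]\<^bsub>G\<^esub> (nat (-i)) = \<one>\<^bsub>G\<^esub>" using group.inv_eq_1_iff[OF grp c] e1 by blast
    moreover have "nat (-i) > 0" using False i by linarith
    ultimately show False using ce2 by blast
  qed
qed

lemma gp_inj: "g [^]\<^bsub>G\<^esub> (i::int) = g [^]\<^bsub>G\<^esub> (j::int) \<Longrightarrow> i = j"
proof -
  assume e: "g [^]\<^bsub>G\<^esub> i = g [^]\<^bsub>G\<^esub> j"
  have "g [^]\<^bsub>G\<^esub> (i - j) = g [^]\<^bsub>G\<^esub> i \<otimes>\<^bsub>G\<^esub> inv\<^bsub>G\<^esub> (g [^]\<^bsub>G\<^esub> j)"
    using grp g_carr by (rule group.int_pow_diff)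
  also have "\<dots> = g [^]\<^bsub>G\<^esub> j \<otimes>\<^bsub>G\<^esub> inv\<^bsub>G\<^esub> (g [^]\<^bsub>G\<^esub> j)" by (simp only: e)
  also have "\<dots> = \<one>\<^bsub>G\<^esub>" by (rule group.r_inv[OF grp gp_carr])
  finally have "g [^]\<^bsub>G\<^esub> (i - j) = \<one>\<^bsub>G\<^esub>" .
  then have "i - j = 0" by (rule inforder)
  then show "i = j" by simp
qed

lemma cyc: "k \<in> cyclic_subgroup G g \<longleftrightarrow> (\<exists>i::int. k = g [^]\<^bsub>G\<^esub> i)"
  by (auto simp: cyclic_subgroup_def)

lemma A_pow: "x \<in> A \<Longrightarrow> act (g [^]\<^bsub>G\<^esub> (i::int)) x \<in> A"
proof -
  assume x: "x \<in> A"
  have "g [^]\<^bsub>G\<^esub> i \<in> cyclic_subgroup G g" by (auto simp: cyclic_subgroup_def)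
  then have "act (g [^]\<^bsub>G\<^esub> i) ` A = A" using ce3 by blast
  then show ?thesis using x by blast
qed

lemma cobdd: assumes "x \<in> A" "y \<in> A" shows "\<exists>i::int. dist x (act (g [^]\<^bsub>G\<^esub> i) y) \<le> \<delta>"
proof -
  have "\<forall>a\<in>A. \<forall>a'\<in>A. \<exists>k\<in>cyclic_subgroup G g. dist a (act k a') \<le> \<delta>"
    by (rule ce5)
  then obtain k where "k \<in> cyclic_subgroup G g" "dist x (act k y) \<le> \<delta>" using assms by blast
  then show ?thesis unfolding cyclic_subgroup_def by blast
qed

lemma act_gp_add: "act (g [^]\<^bsub>G\<^esub> (i::int)) (act (g [^]\<^bsub>G\<^esub> (j::int)) x) = act (g [^]\<^bsub>G\<^esub> (i + j)) x"
  using act_mult[of "g [^]\<^bsub>G\<^esub> i" "g [^]\<^bsub>G\<^esub> j" x] gp_add[of i j] by simp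

lemma dist_gp: "dist (act (g [^]\<^bsub>G\<^esub> (i::int)) x) (act (g [^]\<^bsub>G\<^esub> (j::int)) x) =
    dist (act (g [^]\<^bsub>G\<^esub> (i - j)) x) x"
proof -
  have "act (g [^]\<^bsub>G\<^esub> j) (act (g [^]\<^bsub>G\<^esub> (i - j)) x) = act (g [^]\<^bsub>G\<^esub> i) x" by (simp add: act_gp_add)
  then have "dist (act (g [^]\<^bsub>G\<^esub> i) x) (act (g [^]\<^bsub>G\<^esub> j) x) =
      dist (act (g [^]\<^bsub>G\<^esub> j) (act (g [^]\<^bsub>G\<^esub> (i - j)) x)) (act (g [^]\<^bsub>G\<^esub> j) x)" by simp
  also have "\<dots> = dist (act (g [^]\<^bsub>G\<^esub> (i - j)) x) x" by (rule act_iso[OF gp_carr])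
  finally show ?thesis .
qed

lemma delta0: "0 \<le> \<delta>" using cstr_delta[OF cstr_A] .

definition "bp = \<pi> undefined"
lemma bp_A: "bp \<in> A" using cstr_in[OF cstr_A] by (simp add: bp_def)

lemma disp_bound: "\<exists>c\<ge>0. \<forall>x\<in>A. \<forall>i::int. dist (act (g [^]\<^bsub>G\<^esub> i) x) x \<le> s \<longrightarrow> \<bar>i\<bar> \<le> c"
proof -
  define I where "I = {i::int. dist (act (g [^]\<^bsub>G\<^esub> i) bp) bp \<le> s + 2 * \<delta>}"
  have "(\<lambda>i. g [^]\<^bsub>G\<^esub> i) ` I \<subseteq> {h\<in>carrier G. dist bp (act h bp) \<le> s + 2 * \<delta>}"
    unfolding I_def by (auto simp: dist_commute)
  then have "finite ((\<lambda>i. g [^]\<^bsub>G\<^esub> i) ` I)" using proper finite_subset by blast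
  moreover have "inj_on (\<lambda>i. g [^]\<^bsub>G\<^esub> i) I" using gp_inj by (auto simp: inj_on_def)
  ultimately have fI: "finite I" using finite_imageD by blast
  define c where "c = Max (insert 0 (abs ` I))"
  have c0: "c \<ge> 0" unfolding c_def using fI by simp
  have cI: "\<And>i. i \<in> I \<Longrightarrow> \<bar>i\<bar> \<le> c" unfolding c_def using fI by simp
  have "\<forall>x\<in>A. \<forall>i::int. dist (act (g [^]\<^bsub>G\<^esub> i) x) x \<le> s \<longrightarrow> \<bar>i\<bar> \<le> c"
  proof (intro ballI allI impI)
    fix x and i :: int assume x: "x \<in> A" and d: "dist (act (g [^]\<^bsub>G\<^esub> i) x) x \<le> s"
    obtain j :: int where j: "dist x (act (g [^]\<^bsub>G\<^esub> j) bp) \<le> \<delta>" using cobdd[OF x bp_A] by blast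
    have "dist (act (g [^]\<^bsub>G\<^esub> i) x) (act (g [^]\<^bsub>G\<^esub> i) (act (g [^]\<^bsub>G\<^esub> j) bp)) \<le> \<delta>"
      using j act_iso[OF gp_carr, of i x "act (g [^]\<^bsub>G\<^esub> j) bp"] by linarith
    then have "dist (act (g [^]\<^bsub>G\<^esub> (i + j)) bp) (act (g [^]\<^bsub>G\<^esub> j) bp) \<le> s + 2 * \<delta>"
      using d j dist_triangle[of "act (g [^]\<^bsub>G\<^esub> (i + j)) bp" "act (g [^]\<^bsub>G\<^esub> j) bp" x]
        dist_triangle[of "act (g [^]\<^bsub>G\<^esub> (i + j)) bp" x "act (g [^]\<^bsub>G\<^esub> i) x"]
      by (simp add: act_gp_add dist_commute)
    then have "i \<in> I" unfolding I_def using dist_gp[of "i + j" bp j] by simp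
    then show "\<bar>i\<bar> \<le> c" by (rule cI)
  qed
  then show ?thesis using c0 by blast
qed

lemma disp_small: "\<exists>s. \<forall>x\<in>A. \<forall>i::int. \<bar>i\<bar> \<le> c \<longrightarrow> dist (act (g [^]\<^bsub>G\<^esub> i) x) x \<le> s"
proof -
  define s where "s = (\<Sum>i\<in>{-c..c}. dist (act (g [^]\<^bsub>G\<^esub> i) bp) bp) + 2 * \<delta>"
  have "\<forall>x\<in>A. \<forall>i::int. \<bar>i\<bar> \<le> c \<longrightarrow> dist (act (g [^]\<^bsub>G\<^esub> i) x) x \<le> s"
  proof (intro ballI allI impI)
    fix x and i :: int assume x: "x \<in> A" and ic: "\<bar>i\<bar> \<le> c"
    obtain j :: int where j: "dist x (act (g [^]\<^bsub>G\<^esub> j) bp) \<le> \<delta>" using cobdd[OF x bp_A] by blast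
    have j2: "dist (act (g [^]\<^bsub>G\<^esub> i) x) (act (g [^]\<^bsub>G\<^esub> (i + j)) bp) \<le> \<delta>"
      using j by (simp add: act_gp_add[symmetric])
    have "dist (act (g [^]\<^bsub>G\<^esub> (i + j)) bp) (act (g [^]\<^bsub>G\<^esub> j) bp) = dist (act (g [^]\<^bsub>G\<^esub> i) bp) bp"
      using dist_gp[of "i + j" bp j] by simp
    moreover have "dist (act (g [^]\<^bsub>G\<^esub> i) bp) bp \<le> (\<Sum>i\<in>{-c..c}. dist (act (g [^]\<^bsub>G\<^esub> i) bp) bp)"
      using ic by (intro member_le_sum) auto
    ultimately show "dist (act (g [^]\<^bsub>G\<^esub> i) x) x \<le> s" unfolding s_def
      using j j2 dist_triangle[of "act (g [^]\<^bsub>G\<^esub> i) x" x "act (g [^]\<^bsub>G\<^esub> (i + j)) bp"]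
        dist_triangle[of "act (g [^]\<^bsub>G\<^esub> (i + j)) bp" x "act (g [^]\<^bsub>G\<^esub> j) bp"]
      by (simp add: dist_commute)
  qed
  then show ?thesis by blast
qed

lemma unbdd: assumes x: "x \<in> A" shows "\<exists>i::int. dist (act (g [^]\<^bsub>G\<^esub> i) x) x > R"
proof -
  obtain c where c: "c \<ge> 0" "\<forall>x\<in>A. \<forall>i::int. dist (act (g [^]\<^bsub>G\<^esub> i) x) x \<le> R \<longrightarrow> \<bar>i\<bar> \<le> c"
    using disp_bound by blast
  have "\<not> \<bar>c + 1\<bar> \<le> c" using c(1) by simp
  then have "\<not> dist (act (g [^]\<^bsub>G\<^esub> (c + 1)) x) x \<le> R" using c(2) x by blast
  then show ?thesis by (intro exI[of _ "c + 1"]) simp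
qed

end


lemma int_ivt:
  fixes f :: "nat \<Rightarrow> int"
  assumes "f 0 < j" "j < f N" "\<forall>l<N. \<bar>f (Suc l) - f l\<bar> \<le> c"
  shows "\<exists>l\<le>N. \<bar>f l - j\<bar> \<le> c"
  using assms
proof (induction N)
  case 0
  then show ?case by simp
next
  case (Suc N)
  show ?case
  proof (cases "f N < j")
    case True
    have "\<bar>f (Suc N) - f N\<bar> \<le> c" using Suc.prems(3) by simp
    then have "\<bar>f (Suc N) - j\<bar> \<le> c" using True Suc.prems(2) by linarith
    then show ?thesis by blast
  next
    case False
    show ?thesis
    proof (cases "f N = j")
      case True
      then have "\<bar>f N - j\<bar> \<le> c" using Suc.prems(3) by fastforce
      then show ?thesis using le_SucI by blast
    next
      case False2: False
      then have "j < f N" using False by linarith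
      then obtain l where "l \<le> N" "\<bar>f l - j\<bar> \<le> c" using Suc.IH Suc.prems(1,3) by auto
      then show ?thesis using le_SucI by blast
    qed
  qed
qed

context PS begin

lemma conj_act:
  assumes u: "u \<in> carrier G" and e: "u \<otimes>\<^bsub>G\<^esub> g [^]\<^bsub>G\<^esub> (n::int) = g [^]\<^bsub>G\<^esub> (m::int) \<otimes>\<^bsub>G\<^esub> u"
  shows "act u (act (g [^]\<^bsub>G\<^esub> (n * q)) x) = act (g [^]\<^bsub>G\<^esub> (m * q)) (act u x)"
proof -
  have "u \<otimes>\<^bsub>G\<^esub> (g [^]\<^bsub>G\<^esub> n) [^]\<^bsub>G\<^esub> q = (g [^]\<^bsub>G\<^esub> m) [^]\<^bsub>G\<^esub> q \<otimes>\<^bsub>G\<^esub> u"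
    by (rule group.conj_pow[OF grp gp_carr gp_carr u e])
  moreover have "(g [^]\<^bsub>G\<^esub> n) [^]\<^bsub>G\<^esub> q = g [^]\<^bsub>G\<^esub> (n * q)" by (rule group.int_pow_pow[OF grp g_carr])
  moreover have "(g [^]\<^bsub>G\<^esub> m) [^]\<^bsub>G\<^esub> q = g [^]\<^bsub>G\<^esub> (m * q)" by (rule group.int_pow_pow[OF grp g_carr])
  ultimately have e2: "u \<otimes>\<^bsub>G\<^esub> g [^]\<^bsub>G\<^esub> (n * q) = g [^]\<^bsub>G\<^esub> (m * q) \<otimes>\<^bsub>G\<^esub> u" by simp
  have "act u (act (g [^]\<^bsub>G\<^esub> (n * q)) x) = act (u \<otimes>\<^bsub>G\<^esub> g [^]\<^bsub>G\<^esub> (n * q)) x"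
    by (rule act_mult[OF u gp_carr, symmetric])
  also have "\<dots> = act (g [^]\<^bsub>G\<^esub> (m * q) \<otimes>\<^bsub>G\<^esub> u) x" by (simp only: e2)
  also have "\<dots> = act (g [^]\<^bsub>G\<^esub> (m * q)) (act u x)" by (rule act_mult[OF gp_carr u])
  finally show ?thesis .
qed

lemma gp_near_idx:
  assumes x0: "x0 \<in> A" and c: "\<forall>x\<in>A. \<forall>i::int. dist (act (g [^]\<^bsub>G\<^esub> i) x) x \<le> s \<longrightarrow> \<bar>i\<bar> \<le> c"
    and d: "dist (act (g [^]\<^bsub>G\<^esub> (i::int)) x0) (act (g [^]\<^bsub>G\<^esub> (k::int)) x0) \<le> s"
  shows "\<bar>i - k\<bar> \<le> c"
  using c x0 d dist_gp[of i x0 k] by auto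

end


context PS begin

lemma conj_haus_core:
  assumes c1: "\<forall>x\<in>A. \<forall>i::int. dist (act (g [^]\<^bsub>G\<^esub> i) x) x \<le> (2 * \<delta> + 2 * MM + 2 * NN + 1) + 2 * \<delta> \<longrightarrow> \<bar>i\<bar> \<le> c1"
    and s1: "\<forall>x\<in>A. \<forall>i::int. \<bar>i\<bar> \<le> c1 \<longrightarrow> dist (act (g [^]\<^bsub>G\<^esub> i) x) x \<le> s1"
    and c20: "c2 \<ge> 0"
    and c2: "\<forall>x\<in>A. \<forall>i::int. dist (act (g [^]\<^bsub>G\<^esub> i) x) x \<le> (MM * D + NN + 2 * \<delta> + D) + \<delta> \<longrightarrow> \<bar>i\<bar> \<le> c2"
    and u: "u \<in> carrier G" and x0: "x0 \<in> A" and a0: "a0 \<in> A"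
    and H: "(n::int) \<noteq> 0 \<and> u \<otimes>\<^bsub>G\<^esub> g [^]\<^bsub>G\<^esub> n = g [^]\<^bsub>G\<^esub> (m::int) \<otimes>\<^bsub>G\<^esub> u \<and> dist (act u x0) a0 \<le> D"
    and x: "x \<in> A"
  shows "\<exists>a\<in>A. dist (act u x) a \<le> 2 * \<delta> + s1 + (MM * KK D + NN + 2 * \<delta>) + KK 0"
proof -
    define W where "W = 2 * \<delta> + 2 * MM + 2 * NN + 1"
    define D2 where "D2 = MM * D + NN + 2 * \<delta> + D"
    define C where "C = 2 * \<delta> + s1 + (MM * KK D + NN + 2 * \<delta>) + KK 0"
    have c1: "\<forall>x\<in>A. \<forall>i::int. dist (act (g [^]\<^bsub>G\<^esub> i) x) x \<le> W + 2 * \<delta> \<longrightarrow> \<bar>i\<bar> \<le> c1"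
      using c1 unfolding W_def .
    have c2: "c2 \<ge> 0" "\<forall>x\<in>A. \<forall>i::int. dist (act (g [^]\<^bsub>G\<^esub> i) x) x \<le> D2 + \<delta> \<longrightarrow> \<bar>i\<bar> \<le> c2"
      using c20 c2 unfolding D2_def by auto
    have n0: "n \<noteq> 0" and e: "u \<otimes>\<^bsub>G\<^esub> g [^]\<^bsub>G\<^esub> n = g [^]\<^bsub>G\<^esub> m \<otimes>\<^bsub>G\<^esub> u"
      and dD: "dist (act u x0) a0 \<le> D" using H by auto
    define \<rho> where "\<rho> = (\<lambda>z. act u (\<pi> (act (inv\<^bsub>G\<^esub> u) z)))"
    define B where "B = act u ` A"
    have cB: "cstr B \<rho>" unfolding B_def \<rho>_def by (rule cstr_u[OF u])
    have cA: "cstr A \<pi>" by (rule cstr_A)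
    obtain j :: int where j: "dist x (act (g [^]\<^bsub>G\<^esub> j) x0) \<le> \<delta>" using cobdd[OF x x0] by blast
    define L where "L = c2 + \<bar>j\<bar> + 1"
    define q where "q = n * L"
    have L0: "L \<ge> 1" unfolding L_def using c2(1) by simp
    have "0 < n * n" using n0 by (auto simp: zero_less_mult_iff linorder_neq_iff)
    then have nn: "n * n \<ge> 1" by linarith
    have nq1: "n * q = (n * n) * L" by (simp add: q_def mult.assoc)
    have "(n * n) * L \<ge> 1 * L" using nn L0 by (intro mult_right_mono) auto
    then have nq: "n * q \<ge> L" by (simp only: nq1)
    define P where "P = (\<lambda>r::int. act u (act (g [^]\<^bsub>G\<^esub> (n * r)) x0))"
    define ap where "ap = (\<lambda>r::int. act (g [^]\<^bsub>G\<^esub> (m * r)) a0)"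
    have PB: "P r \<in> B" for r unfolding P_def B_def using A_pow[OF x0] by blast
    have apA: "ap r \<in> A" for r unfolding ap_def using A_pow[OF a0] by blast
    have dPa: "dist (ap r) (P r) \<le> D" for r
    proof -
      have "P r = act (g [^]\<^bsub>G\<^esub> (m * r)) (act u x0)" unfolding P_def by (rule conj_act[OF u e])
      then have "dist (ap r) (P r) = dist a0 (act u x0)" unfolding ap_def using act_iso[OF gp_carr] by simp
      then show ?thesis using dD by (simp add: dist_commute)
    qed
    obtain a b \<alpha> where p: "(a, b, \<alpha>) \<in> \<Gamma>" "\<alpha> a = ap (- q)" "\<alpha> b = ap q" using \<Gamma>_join by blast
    have ab: "a \<le> b" using \<Gamma>_qg(1)[OF p(1)] .
    have morseB: "\<exists>e\<in>B. dist (\<alpha> t) e \<le> KK D" if "t \<in> {a..b}" for t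
      by (rule morse[OF cB p(1) PB _ PB _ that]) (use dPa p in auto)
    have morseA: "\<exists>e\<in>A. dist (\<alpha> t) e \<le> KK 0" if "t \<in> {a..b}" for t
      by (rule morse[OF cA p(1) apA _ apA _ that]) (use p in auto)
    define Mc where "Mc = nat \<lceil>b - a\<rceil>"
    define tt where "tt = (\<lambda>l::nat. min (a + real l) b)"
    have tt_in: "tt l \<in> {a..b}" for l unfolding tt_def using ab by auto
    have tt0: "tt 0 = a" unfolding tt_def using ab by simp
    have ttM: "tt Mc = b" unfolding tt_def Mc_def using ab by (simp add: min_def) linarith
    have ttS: "\<bar>tt (Suc l) - tt l\<bar> \<le> 1" for l unfolding tt_def by (auto simp: min_def)
    define y where "y = (\<lambda>l. \<alpha> (tt l))"
    define xl where "xl = (\<lambda>l. \<pi> (act (inv\<^bsub>G\<^esub> u) (y l)))"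
    have xlA: "xl l \<in> A" for l unfolding xl_def using cstr_in[OF cA] .
    have rho_xl: "\<rho> (y l) = act u (xl l)" for l unfolding \<rho>_def xl_def ..
    define idx where "idx = (\<lambda>l. SOME i::int. dist (xl l) (act (g [^]\<^bsub>G\<^esub> i) x0) \<le> \<delta>)"
    have idx: "dist (xl l) (act (g [^]\<^bsub>G\<^esub> (idx l)) x0) \<le> \<delta>" for l
      unfolding idx_def using someI_ex[OF cobdd[OF xlA x0]] .
    have step: "\<bar>idx (Suc l) - idx l\<bar> \<le> c1" for l
    proof -
      have "dist (y (Suc l)) (y l) \<le> 1" unfolding y_def using qg_ge[OF p(1) tt_in[of "Suc l"] tt_in[of l]] ttS[of l] by linarith
      then have "dist (\<rho> (y (Suc l))) (\<rho> (y l)) \<le> W" unfolding W_def by (rule cstr_cont[OF cB])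
      then have "dist (xl (Suc l)) (xl l) \<le> W" unfolding rho_xl using act_iso[OF u] by simp
      then have "dist (act (g [^]\<^bsub>G\<^esub> (idx (Suc l))) x0) (act (g [^]\<^bsub>G\<^esub> (idx l)) x0) \<le> W + 2 * \<delta>"
        using idx[of l] idx[of "Suc l"]
          dist_triangle[of "act (g [^]\<^bsub>G\<^esub> (idx (Suc l))) x0" "act (g [^]\<^bsub>G\<^esub> (idx l)) x0" "xl (Suc l)"]
          dist_triangle[of "xl (Suc l)" "act (g [^]\<^bsub>G\<^esub> (idx l)) x0" "xl l"]
        by (simp add: dist_commute)
      then show ?thesis by (rule gp_near_idx[OF x0 c1])
    qed
    have endp: "\<bar>idx l - n * r\<bar> \<le> c2" if "y l = ap r" for l r
    proof -
      have "dist (y l) (\<rho> (y l)) \<le> MM * D + NN + 2 * \<delta>"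
        using cstr_near[OF cB PB[of r] dPa[of r]] that by simp
      then have "dist (\<rho> (y l)) (P r) \<le> D2" unfolding D2_def
        using dPa[of r] that dist_triangle[of "\<rho> (y l)" "P r" "y l"] by (simp add: dist_commute)
      then have "dist (xl l) (act (g [^]\<^bsub>G\<^esub> (n * r)) x0) \<le> D2"
        unfolding rho_xl P_def using act_iso[OF u] by simp
      then have "dist (act (g [^]\<^bsub>G\<^esub> (idx l)) x0) (act (g [^]\<^bsub>G\<^esub> (n * r)) x0) \<le> D2 + \<delta>"
        using idx[of l] dist_triangle[of "act (g [^]\<^bsub>G\<^esub> (idx l)) x0" "act (g [^]\<^bsub>G\<^esub> (n * r)) x0" "xl l"]
        by (simp add: dist_commute)
      then show ?thesis by (rule gp_near_idx[OF x0 c2(2)])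
    qed
    have e0: "\<bar>idx 0 - n * (- q)\<bar> \<le> c2" using endp[of 0 "- q"] p tt0 unfolding y_def by simp
    have eM: "\<bar>idx Mc - n * q\<bar> \<le> c2" using endp[of Mc q] p ttM unfolding y_def by simp
    have "idx 0 < j" using e0 nq unfolding L_def by simp
    moreover have "j < idx Mc" using eM nq unfolding L_def by simp
    ultimately obtain l where l: "\<bar>idx l - j\<bar> \<le> c1" using int_ivt[of idx j Mc c1] step by blast
    obtain e where e: "e \<in> B" "dist (y l) e \<le> KK D" using morseB tt_in unfolding y_def by blast
    have d4: "dist (y l) (\<rho> (y l)) \<le> MM * KK D + NN + 2 * \<delta>" by (rule cstr_near[OF cB e])
    obtain a' where a': "a' \<in> A" "dist (y l) a' \<le> KK 0" using morseA tt_in unfolding y_def by blast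
    have d1: "dist (act u x) (act u (act (g [^]\<^bsub>G\<^esub> j) x0)) \<le> \<delta>" using j act_iso[OF u] by simp
    have d2: "dist (act u (act (g [^]\<^bsub>G\<^esub> j) x0)) (act u (act (g [^]\<^bsub>G\<^esub> (idx l)) x0)) \<le> s1"
    proof -
      have "\<bar>j - idx l\<bar> \<le> c1" using l by linarith
      then have "dist (act (g [^]\<^bsub>G\<^esub> (j - idx l)) x0) x0 \<le> s1" using s1 x0 by blast
      then show ?thesis using act_iso[OF u] dist_gp[of j x0 "idx l"] by simp
    qed
    have d3: "dist (act u (act (g [^]\<^bsub>G\<^esub> (idx l)) x0)) (\<rho> (y l)) \<le> \<delta>"
      unfolding rho_xl using idx[of l] act_iso[OF u] by (simp add: dist_commute)
    have "dist (act u x) a' \<le> C" unfolding C_def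
      using d1 d2 d3 d4 a'(2)
        dist_triangle[of "act u x" a' "act u (act (g [^]\<^bsub>G\<^esub> j) x0)"]
        dist_triangle[of "act u (act (g [^]\<^bsub>G\<^esub> j) x0)" a' "act u (act (g [^]\<^bsub>G\<^esub> (idx l)) x0)"]
        dist_triangle[of "act u (act (g [^]\<^bsub>G\<^esub> (idx l)) x0)" a' "\<rho> (y l)"]
        dist_triangle[of "\<rho> (y l)" a' "y l"]
      by (simp add: dist_commute)
    then show ?thesis using a'(1) unfolding C_def by blast
qed

lemma conj_haus:
  assumes D0: "D \<ge> 0"
  shows "\<exists>C. \<forall>u\<in>carrier G. \<forall>n::int. \<forall>m::int. \<forall>x0\<in>A. \<forall>a0\<in>A.
     n \<noteq> 0 \<and> u \<otimes>\<^bsub>G\<^esub> g [^]\<^bsub>G\<^esub> n = g [^]\<^bsub>G\<^esub> m \<otimes>\<^bsub>G\<^esub> u \<and> dist (act u x0) a0 \<le> D \<longrightarrow>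
     (\<forall>x\<in>A. \<exists>a\<in>A. dist (act u x) a \<le> C)"
proof -
  obtain c1 where c1: "c1 \<ge> 0" "\<forall>x\<in>A. \<forall>i::int. dist (act (g [^]\<^bsub>G\<^esub> i) x) x \<le> (2 * \<delta> + 2 * MM + 2 * NN + 1) + 2 * \<delta> \<longrightarrow> \<bar>i\<bar> \<le> c1"
    using disp_bound by blast
  obtain s1 where s1: "\<forall>x\<in>A. \<forall>i::int. \<bar>i\<bar> \<le> c1 \<longrightarrow> dist (act (g [^]\<^bsub>G\<^esub> i) x) x \<le> s1"
    using disp_small by blast
  obtain c2 where c2: "c2 \<ge> 0" "\<forall>x\<in>A. \<forall>i::int. dist (act (g [^]\<^bsub>G\<^esub> i) x) x \<le> (MM * D + NN + 2 * \<delta> + D) + \<delta> \<longrightarrow> \<bar>i\<bar> \<le> c2"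
    using disp_bound by blast
  show ?thesis
    using conj_haus_core[OF c1(2) s1 c2(1) c2(2)] by blast
qed

end


lemma (in group) pig_eq:
  assumes c: "X \<in> carrier G" "Y \<in> carrier G" "X' \<in> carrier G" "Y' \<in> carrier G" "u \<in> carrier G"
    and e: "inv X \<otimes> u \<otimes> Y = inv X' \<otimes> u \<otimes> Y'"
  shows "u \<otimes> (Y \<otimes> inv Y') = (X \<otimes> inv X') \<otimes> u"
proof -
  have "u \<otimes> (Y \<otimes> inv Y') = X \<otimes> (inv X \<otimes> u \<otimes> Y) \<otimes> inv Y'"
    using c by (simp add: m_assoc[symmetric])
  also have "\<dots> = X \<otimes> (inv X' \<otimes> u \<otimes> Y') \<otimes> inv Y'" by (simp only: e)
  also have "\<dots> = (X \<otimes> inv X') \<otimes> u" using c by (simp add: m_assoc)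
  finally show ?thesis .
qed

context PS begin

lemma EE_nonneg: "r \<ge> 0 \<Longrightarrow> EE r \<ge> 0" unfolding EE_def using MM_ge NN_ge delta0 by simp
lemma KK_nonneg: "r \<ge> 0 \<Longrightarrow> KK r \<ge> 0"
  unfolding KK_def using MM_ge NN_ge delta0 EE_nonneg[of r] by (simp add: zero_le_mult_iff)

lemma pigeon_core:
  fixes N :: nat
  defines "T \<equiv> MM * (2 * KK 0 + 2 * \<delta> + 1) + NN"
  defines "D' \<equiv> KK \<delta> + KK 0 + 2 * \<delta>"
  assumes NF: "N = card {w\<in>carrier G. dist bp (act w bp) \<le> D'}"
    and u: "u \<in> carrier G" and x: "x \<in> A" and y: "y \<in> A"
    and big: "dist (\<pi> (act u x)) (\<pi> (act u y)) > real N * T + 2 * \<delta> + 1"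
  shows "\<exists>n::int. \<exists>m::int. \<exists>x0\<in>A. \<exists>a0\<in>A. n \<noteq> 0 \<and>
     u \<otimes>\<^bsub>G\<^esub> g [^]\<^bsub>G\<^esub> n = g [^]\<^bsub>G\<^esub> m \<otimes>\<^bsub>G\<^esub> u \<and> dist (act u x0) a0 \<le> D'"
proof -
  define F where "F = {w\<in>carrier G. dist bp (act w bp) \<le> D'}"
  have fF: "finite F" unfolding F_def by (rule proper)
  have d0: "0 \<le> \<delta>" by (rule delta0)
  have KB0: "KK 0 \<ge> 0" by (rule KK_nonneg) simp
  have KA0: "KK \<delta> \<ge> 0" by (rule KK_nonneg[OF d0])
  have "MM * (2 * KK 0 + 2 * \<delta> + 1) \<ge> 0" using MM_ge KB0 d0 by (intro mult_nonneg_nonneg) auto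
  then have T0: "T \<ge> 1" unfolding T_def using NN_ge by linarith
  have TT: "MM * (2 * KK 0 + 2 * \<delta>) + NN < T" unfolding T_def using MM_ge by (simp add: algebra_simps)
  define \<rho> where "\<rho> = (\<lambda>z. act u (\<pi> (act (inv\<^bsub>G\<^esub> u) z)))"
  define B where "B = act u ` A"
  have cB: "cstr B \<rho>" unfolding B_def \<rho>_def by (rule cstr_u[OF u])
  have cA: "cstr A \<pi>" by (rule cstr_A)
  have xB: "act u x \<in> B" "act u y \<in> B" unfolding B_def using x y by auto
  obtain a b \<alpha> where p: "(a, b, \<alpha>) \<in> \<Gamma>" "\<alpha> a = act u x" "\<alpha> b = act u y" using \<Gamma>_join by blast
  have NT0: "real N * T \<ge> 0" using T0 by simp
  then have "dist (\<pi> (\<alpha> a)) (\<pi> (\<alpha> b)) > \<delta>" using big p d0 by simp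
  from cstr_cs2[OF cA p(1) this] obtain s t where
    st: "s \<in> {a..b}" "dist (\<alpha> s) (\<pi> (act u x)) \<le> \<delta>" "t \<in> {a..b}" "dist (\<alpha> t) (\<pi> (act u y)) \<le> \<delta>"
    using p by auto
  define t1 where "t1 = min s t"
  define t2 where "t2 = max s t"
  have t12: "t1 \<in> {a..b}" "t2 \<in> {a..b}" "t1 \<le> t2" unfolding t1_def t2_def using st by auto
  have dst: "dist (\<alpha> s) (\<alpha> t) > real N * T + 1"
    using big st dist_triangle[of "\<pi> (act u x)" "\<pi> (act u y)" "\<alpha> s"]
      dist_triangle[of "\<alpha> s" "\<pi> (act u y)" "\<alpha> t"] by (simp add: dist_commute)
  have "dist (\<alpha> t1) (\<alpha> t2) = dist (\<alpha> s) (\<alpha> t)"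
    unfolding t1_def t2_def by (cases "s \<le> t") (auto simp: dist_commute min_def max_def)
  then have len: "t2 - t1 > real N * T"
    using dst qg_ge[OF p(1) t12(1) t12(2)] t12(3) by simp
  have sub: "(t1, t2, \<alpha>) \<in> \<Gamma>" using \<Gamma>_sub[OF p(1)] t12 by auto
  have endA: "\<exists>e\<in>A. dist (\<alpha> r) e \<le> \<delta>" if "r = t1 \<or> r = t2" for r
  proof -
    have "r = s \<or> r = t" using that unfolding t1_def t2_def by (cases "s \<le> t") (auto simp: min_def max_def)
    then show ?thesis using st cstr_in[OF cA] by blast
  qed
  obtain e1 e2 where e12: "e1 \<in> A" "dist (\<alpha> t1) e1 \<le> \<delta>" "e2 \<in> A" "dist (\<alpha> t2) e2 \<le> \<delta>"
    using endA by blast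
  have mA: "\<exists>e\<in>A. dist (\<alpha> r) e \<le> KK \<delta>" if "r \<in> {t1..t2}" for r
    by (rule morse[OF cA sub e12(1,2) e12(3,4) that])
  have mB: "\<exists>e\<in>B. dist (\<alpha> r) e \<le> KK 0" if "r \<in> {a..b}" for r
    by (rule morse[OF cB p(1) xB(1) _ xB(2) _ that]) (use p in auto)
  define \<tau> where "\<tau> = (\<lambda>k::nat. t1 + real k * T)"
  have \<tau>_in: "\<tau> k \<in> {t1..t2}" if "k \<le> N" for k
  proof -
    have "real k * T \<le> real N * T" using that T0 by (simp add: mult_right_mono)
    then have "t1 + real k * T \<le> t2" using len by linarith
    moreover have "0 \<le> real k * T" using T0 by simp
    ultimately show ?thesis unfolding \<tau>_def by simp
  qed
  have \<tau>_ab: "\<tau> k \<in> {a..b}" if "k \<le> N" for k using \<tau>_in[OF that] t12 by auto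
  have ex: "\<exists>pq::int \<times> int. dist (act (g [^]\<^bsub>G\<^esub> (fst pq)) bp) (act u (act (g [^]\<^bsub>G\<^esub> (snd pq)) bp)) \<le> D' \<and>
       dist (\<alpha> (\<tau> k)) (act u (act (g [^]\<^bsub>G\<^esub> (snd pq)) bp)) \<le> KK 0 + \<delta>" if kN: "k \<in> {..N}" for k
  proof -
    obtain ea where ea: "ea \<in> A" "dist (\<alpha> (\<tau> k)) ea \<le> KK \<delta>" using mA \<tau>_in kN by auto
    obtain eb where eb: "eb \<in> A" "dist (\<alpha> (\<tau> k)) (act u eb) \<le> KK 0" using mB \<tau>_ab kN unfolding B_def by auto
    obtain mm :: int where mm: "dist ea (act (g [^]\<^bsub>G\<^esub> mm) bp) \<le> \<delta>" using cobdd[OF ea(1) bp_A] by blast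
    obtain nn :: int where nn: "dist eb (act (g [^]\<^bsub>G\<^esub> nn) bp) \<le> \<delta>" using cobdd[OF eb(1) bp_A] by blast
    have nn': "dist (act u eb) (act u (act (g [^]\<^bsub>G\<^esub> nn) bp)) \<le> \<delta>" using nn act_iso[OF u] by simp
    have 1: "dist (\<alpha> (\<tau> k)) (act u (act (g [^]\<^bsub>G\<^esub> nn) bp)) \<le> KK 0 + \<delta>"
      using eb(2) nn' dist_triangle[of "\<alpha> (\<tau> k)" "act u (act (g [^]\<^bsub>G\<^esub> nn) bp)" "act u eb"] by linarith
    have 2: "dist (act (g [^]\<^bsub>G\<^esub> mm) bp) (act u (act (g [^]\<^bsub>G\<^esub> nn) bp)) \<le> D'" unfolding D'_def
      using 1 ea(2) mm dist_triangle[of "act (g [^]\<^bsub>G\<^esub> mm) bp" "act u (act (g [^]\<^bsub>G\<^esub> nn) bp)" ea]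
        dist_triangle[of ea "act u (act (g [^]\<^bsub>G\<^esub> nn) bp)" "\<alpha> (\<tau> k)"]
      by (simp add: dist_commute)
    show ?thesis using 1 2 by (intro exI[of _ "(mm, nn)"]) simp
  qed
  define f where "f = (\<lambda>k. SOME pq::int \<times> int. dist (act (g [^]\<^bsub>G\<^esub> (fst pq)) bp) (act u (act (g [^]\<^bsub>G\<^esub> (snd pq)) bp)) \<le> D' \<and>
       dist (\<alpha> (\<tau> k)) (act u (act (g [^]\<^bsub>G\<^esub> (snd pq)) bp)) \<le> KK 0 + \<delta>)"
  have f: "\<forall>k\<in>{..N}. dist (act (g [^]\<^bsub>G\<^esub> (fst (f k))) bp) (act u (act (g [^]\<^bsub>G\<^esub> (snd (f k))) bp)) \<le> D' \<and>
       dist (\<alpha> (\<tau> k)) (act u (act (g [^]\<^bsub>G\<^esub> (snd (f k))) bp)) \<le> KK 0 + \<delta>"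
  proof
    fix k assume k: "k \<in> {..N}"
    show "dist (act (g [^]\<^bsub>G\<^esub> (fst (f k))) bp) (act u (act (g [^]\<^bsub>G\<^esub> (snd (f k))) bp)) \<le> D' \<and>
       dist (\<alpha> (\<tau> k)) (act u (act (g [^]\<^bsub>G\<^esub> (snd (f k))) bp)) \<le> KK 0 + \<delta>"
      unfolding f_def by (rule someI_ex[OF ex[OF k]])
  qed
  define mf where "mf = (\<lambda>k. fst (f k))"
  define nf where "nf = (\<lambda>k. snd (f k))"
  define w where "w = (\<lambda>k. inv\<^bsub>G\<^esub> (g [^]\<^bsub>G\<^esub> (mf k)) \<otimes>\<^bsub>G\<^esub> u \<otimes>\<^bsub>G\<^esub> g [^]\<^bsub>G\<^esub> (nf k))"
  have wc: "w k \<in> carrier G" for k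
  proof -
    have "inv\<^bsub>G\<^esub> (g [^]\<^bsub>G\<^esub> (mf k)) \<in> carrier G" by (rule group.inv_closed[OF grp gp_carr])
    then have "inv\<^bsub>G\<^esub> (g [^]\<^bsub>G\<^esub> (mf k)) \<otimes>\<^bsub>G\<^esub> u \<in> carrier G"
      using u by (rule monoid.m_closed[OF group.is_monoid[OF grp]])
    then show ?thesis unfolding w_def using gp_carr by (rule monoid.m_closed[OF group.is_monoid[OF grp]])
  qed
  have wact: "act (w k) z = act (inv\<^bsub>G\<^esub> (g [^]\<^bsub>G\<^esub> (mf k))) (act u (act (g [^]\<^bsub>G\<^esub> (nf k)) z))" for k z
  proof -
    have ic: "inv\<^bsub>G\<^esub> (g [^]\<^bsub>G\<^esub> (mf k)) \<in> carrier G" by (rule group.inv_closed[OF grp gp_carr])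
    have uc: "inv\<^bsub>G\<^esub> (g [^]\<^bsub>G\<^esub> (mf k)) \<otimes>\<^bsub>G\<^esub> u \<in> carrier G"
      using ic u by (rule monoid.m_closed[OF group.is_monoid[OF grp]])
    show ?thesis unfolding w_def using act_mult[OF uc gp_carr] act_mult[OF ic u] by simp
  qed
  have wF: "w k \<in> F" if "k \<in> {..N}" for k
  proof -
    have "dist bp (act (w k) bp) = dist (act (g [^]\<^bsub>G\<^esub> (mf k)) bp) (act u (act (g [^]\<^bsub>G\<^esub> (nf k)) bp))"
    proof -
      have "dist bp (act (w k) bp) = dist (act (g [^]\<^bsub>G\<^esub> (mf k)) bp) (act (g [^]\<^bsub>G\<^esub> (mf k)) (act (w k) bp))"
        by (rule act_iso[OF gp_carr, symmetric])
      also have "act (g [^]\<^bsub>G\<^esub> (mf k)) (act (w k) bp) = act u (act (g [^]\<^bsub>G\<^esub> (nf k)) bp)"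
        unfolding wact by (rule act_inv2[OF gp_carr])
      finally show ?thesis .
    qed
    then show ?thesis unfolding F_def using f that wc unfolding mf_def nf_def by simp
  qed
  have "\<not> inj_on w {..N}"
  proof
    assume "inj_on w {..N}"
    then have "card {..N} \<le> card F" using wF fF by (intro card_inj_on_le) auto
    then show False using NF unfolding F_def by simp
  qed
  then obtain k k' where kk: "k \<in> {..N}" "k' \<in> {..N}" "k \<noteq> k'" "w k = w k'"
    unfolding inj_on_def by blast
  have nk: "nf k \<noteq> nf k'"
  proof
    assume eqn: "nf k = nf k'"
    have "dist (\<alpha> (\<tau> k)) (\<alpha> (\<tau> k')) \<le> 2 * KK 0 + 2 * \<delta>"
    proof -
      have f1: "dist (\<alpha> (\<tau> k)) (act u (act (g [^]\<^bsub>G\<^esub> (nf k)) bp)) \<le> KK 0 + \<delta>"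
        using f kk(1) unfolding nf_def by blast
      have f2: "dist (\<alpha> (\<tau> k')) (act u (act (g [^]\<^bsub>G\<^esub> (nf k)) bp)) \<le> KK 0 + \<delta>"
        using f kk(2) eqn unfolding nf_def by auto
      show ?thesis using f1 f2 dist_triangle[of "\<alpha> (\<tau> k)" "\<alpha> (\<tau> k')" "act u (act (g [^]\<^bsub>G\<^esub> (nf k)) bp)"]
        by (simp add: dist_commute)
    qed
    then have "\<bar>\<tau> k - \<tau> k'\<bar> \<le> MM * (2 * KK 0 + 2 * \<delta>) + NN"
    proof -
      have "\<bar>\<tau> k - \<tau> k'\<bar> \<le> MM * dist (\<alpha> (\<tau> k)) (\<alpha> (\<tau> k')) + NN"
        using qg_le[OF p(1) \<tau>_ab \<tau>_ab] kk(1,2) by simp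
      moreover have "MM * dist (\<alpha> (\<tau> k)) (\<alpha> (\<tau> k')) \<le> MM * (2 * KK 0 + 2 * \<delta>)"
        using \<open>dist (\<alpha> (\<tau> k)) (\<alpha> (\<tau> k')) \<le> 2 * KK 0 + 2 * \<delta>\<close> MM_ge by (intro mult_left_mono) auto
      ultimately show ?thesis by linarith
    qed
    moreover have "\<bar>\<tau> k - \<tau> k'\<bar> \<ge> T"
    proof -
      have "\<bar>\<tau> k - \<tau> k'\<bar> = \<bar>real k - real k'\<bar> * T" unfolding \<tau>_def using T0
        by (simp add: abs_mult left_diff_distrib[symmetric])
      moreover have "\<bar>real k - real k'\<bar> \<ge> 1" using kk(3) by linarith
      moreover have "1 * T \<le> \<bar>real k - real k'\<bar> * T" using T0 \<open>\<bar>real k - real k'\<bar> \<ge> 1\<close>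
        by (intro mult_right_mono) auto
      ultimately show ?thesis by simp
    qed
    ultimately show False using TT by linarith
  qed
  have geq: "u \<otimes>\<^bsub>G\<^esub> (g [^]\<^bsub>G\<^esub> (nf k) \<otimes>\<^bsub>G\<^esub> inv\<^bsub>G\<^esub> (g [^]\<^bsub>G\<^esub> (nf k'))) =
      (g [^]\<^bsub>G\<^esub> (mf k) \<otimes>\<^bsub>G\<^esub> inv\<^bsub>G\<^esub> (g [^]\<^bsub>G\<^esub> (mf k'))) \<otimes>\<^bsub>G\<^esub> u"
    by (rule group.pig_eq[OF grp gp_carr gp_carr gp_carr gp_carr u]) (use kk(4) in \<open>simp add: w_def\<close>)
  have "u \<otimes>\<^bsub>G\<^esub> g [^]\<^bsub>G\<^esub> (nf k - nf k') = g [^]\<^bsub>G\<^esub> (mf k - mf k') \<otimes>\<^bsub>G\<^esub> u"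
    using geq by (simp add: group.int_pow_diff[OF grp g_carr])
  moreover have "dist (act u (act (g [^]\<^bsub>G\<^esub> (nf k)) bp)) (act (g [^]\<^bsub>G\<^esub> (mf k)) bp) \<le> D'"
    using f kk(1) unfolding mf_def nf_def by (simp add: dist_commute)
  ultimately show ?thesis using nk A_pow[OF bp_A]
    by (intro exI[of _ "nf k - nf k'"] exI[of _ "mf k - mf k'"] bexI[of _ "act (g [^]\<^bsub>G\<^esub> (nf k)) bp"]
        bexI[of _ "act (g [^]\<^bsub>G\<^esub> (mf k)) bp"] conjI) auto
qed

end


lemma infdist_ex: assumes "A \<noteq> {}" "infdist x A < e" shows "\<exists>a\<in>A. dist x a < e"
proof -
  have "bdd_below ((\<lambda>a. dist x a) ` A)" by (rule bdd_belowI[of _ 0]) auto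
  then show ?thesis using assms by (simp add: infdist_notempty cINF_less_iff)
qed

lemma ediam_gt: "ereal \<theta> < ediam S \<longleftrightarrow> (\<exists>p\<in>S. \<exists>q\<in>S. \<theta> < dist p q)"
  unfolding ediam_def by (auto simp: less_SUP_iff)

lemma haus_le: "ehausdist S T \<le> ereal \<theta> \<longleftrightarrow> (\<forall>x\<in>S. infdist x T \<le> \<theta>) \<and> (\<forall>y\<in>T. infdist y S \<le> \<theta>)"
  unfolding ehausdist_def by (simp add: SUP_le_iff)

lemma haus_fin: assumes "ehausdist S T < \<infinity>" shows "\<exists>C. \<forall>x\<in>S. infdist x T \<le> C"
proof -
  have "(SUP x\<in>S. ereal (infdist x T)) \<le> ehausdist S T" unfolding ehausdist_def by (rule max.cobounded1)
  then have "(SUP x\<in>S. ereal (infdist x T)) < \<infinity>" using assms by (rule order.strict_trans1)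
  then have "(SUP x\<in>S. ereal (infdist x T)) \<noteq> \<infinity>" by simp
  then have "\<exists>n::nat. (SUP x\<in>S. ereal (infdist x T)) < ereal (real n)" by (simp only: less_PInf_Ex_of_nat)
  then obtain n :: nat where n: "(SUP x\<in>S. ereal (infdist x T)) < ereal (real n)" by blast
  have "\<forall>x\<in>S. infdist x T \<le> real n"
  proof
    fix x assume "x \<in> S"
    then have "ereal (infdist x T) \<le> (SUP x\<in>S. ereal (infdist x T))" by (rule SUP_upper)
    then have "ereal (infdist x T) < ereal (real n)" using n by (rule order.strict_trans1)
    then show "infdist x T \<le> real n" by simp
  qed
  then show ?thesis by blast
qed

lemma (in group) conj_swap:
  assumes "u \<in> carrier G" "X \<in> carrier G" "Y \<in> carrier G" "u \<otimes> X = Y \<otimes> u"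
  shows "inv u \<otimes> Y = X \<otimes> inv u"
proof -
  have "inv u \<otimes> Y = inv u \<otimes> (Y \<otimes> u) \<otimes> inv u" using assms(1-3) by (simp add: m_assoc)
  also have "\<dots> = inv u \<otimes> (u \<otimes> X) \<otimes> inv u" by (simp only: assms(4)[symmetric])
  also have "\<dots> = X \<otimes> inv u" using assms(1-3) by (simp add: m_assoc[symmetric])
  finally show ?thesis .
qed

lemma (in group) conj_one:
  assumes "u \<in> carrier G" "X \<in> carrier G" "u \<otimes> X = \<one> \<otimes> u" shows "X = \<one>"
proof -
  have "u \<otimes> X = u" using assms by simp
  then show ?thesis using l_cancel_one[of u X] assms by blast
qed

context PS begin

definition "HB u C \<longleftrightarrow> (\<forall>x\<in>A. \<exists>a\<in>A. dist (act u x) a \<le> C) \<and> (\<forall>a\<in>A. \<exists>x\<in>A. dist a (act u x) \<le> C)"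

lemma main_bound: "\<exists>\<theta>0 C0. \<theta>0 \<ge> 0 \<and> C0 \<ge> 0 \<and> (\<forall>u\<in>carrier G. \<forall>x\<in>A. \<forall>y\<in>A.
   dist (\<pi> (act u x)) (\<pi> (act u y)) > \<theta>0 \<longrightarrow> HB u C0)"
proof -
  define T where "T = MM * (2 * KK 0 + 2 * \<delta>) + MM + NN"
  define D' where "D' = KK \<delta> + KK 0 + 2 * \<delta>"
  define N where "N = card {w\<in>carrier G. dist bp (act w bp) \<le> D'}"
  have d0: "0 \<le> \<delta>" by (rule delta0)
  have KB0: "KK 0 \<ge> 0" by (rule KK_nonneg) simp
  have KA0: "KK \<delta> \<ge> 0" by (rule KK_nonneg[OF d0])
  have D0: "D' \<ge> 0" unfolding D'_def using d0 KB0 KA0 by simp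
  have T0: "T \<ge> 0" unfolding T_def using MM_ge NN_ge KB0 d0 by (simp add: zero_le_mult_iff)
  obtain C where C: "\<forall>u\<in>carrier G. \<forall>n::int. \<forall>m::int. \<forall>x0\<in>A. \<forall>a0\<in>A.
     n \<noteq> 0 \<and> u \<otimes>\<^bsub>G\<^esub> g [^]\<^bsub>G\<^esub> n = g [^]\<^bsub>G\<^esub> m \<otimes>\<^bsub>G\<^esub> u \<and> dist (act u x0) a0 \<le> D' \<longrightarrow>
     (\<forall>x\<in>A. \<exists>a\<in>A. dist (act u x) a \<le> C)" using conj_haus[OF D0] by (rule exE)
  define \<theta>0 where "\<theta>0 = real N * T + 2 * \<delta> + 1"
  have "\<forall>u\<in>carrier G. \<forall>x\<in>A. \<forall>y\<in>A. dist (\<pi> (act u x)) (\<pi> (act u y)) > \<theta>0 \<longrightarrow> HB u \<bar>C\<bar>"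
  proof (intro ballI impI)
    fix u x y assume u: "u \<in> carrier G" and x: "x \<in> A" and y: "y \<in> A"
      and big: "dist (\<pi> (act u x)) (\<pi> (act u y)) > \<theta>0"
    have big': "dist (\<pi> (act u x)) (\<pi> (act u y)) > real N * (MM * (2 * KK 0 + 2 * \<delta> + 1) + NN) + 2 * \<delta> + 1"
      using big unfolding \<theta>0_def T_def by (simp add: algebra_simps)
    have NF: "N = card {w\<in>carrier G. dist bp (act w bp) \<le> KK \<delta> + KK 0 + 2 * \<delta>}"
      unfolding N_def D'_def ..
    have "\<exists>n::int. \<exists>m::int. \<exists>x0\<in>A. \<exists>a0\<in>A. n \<noteq> 0 \<and>
     u \<otimes>\<^bsub>G\<^esub> g [^]\<^bsub>G\<^esub> n = g [^]\<^bsub>G\<^esub> m \<otimes>\<^bsub>G\<^esub> u \<and> dist (act u x0) a0 \<le> D'"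
      unfolding D'_def by (rule pigeon_core[OF NF u x y big'])
    then obtain n m :: int and x0 a0 where nm: "x0 \<in> A" "a0 \<in> A" "n \<noteq> 0"
      "u \<otimes>\<^bsub>G\<^esub> g [^]\<^bsub>G\<^esub> n = g [^]\<^bsub>G\<^esub> m \<otimes>\<^bsub>G\<^esub> u" "dist (act u x0) a0 \<le> D'"
      by (elim exE bexE conjE) (rule that)
    have H1: "n \<noteq> 0 \<and> u \<otimes>\<^bsub>G\<^esub> g [^]\<^bsub>G\<^esub> n = g [^]\<^bsub>G\<^esub> m \<otimes>\<^bsub>G\<^esub> u \<and> dist (act u x0) a0 \<le> D'"
      using nm(3,4,5) by blast
    have h1: "\<forall>x\<in>A. \<exists>a\<in>A. dist (act u x) a \<le> C" using C[rule_format, OF u nm(1) nm(2) H1] by blast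
    have iu: "inv\<^bsub>G\<^esub> u \<in> carrier G" by (rule group.inv_closed[OF grp u])
    have e2: "inv\<^bsub>G\<^esub> u \<otimes>\<^bsub>G\<^esub> g [^]\<^bsub>G\<^esub> m = g [^]\<^bsub>G\<^esub> n \<otimes>\<^bsub>G\<^esub> inv\<^bsub>G\<^esub> u"
      by (rule group.conj_swap[OF grp u gp_carr gp_carr nm(4)])
    have m0: "m \<noteq> 0"
    proof
      assume "m = 0"
      then have "u \<otimes>\<^bsub>G\<^esub> g [^]\<^bsub>G\<^esub> n = \<one>\<^bsub>G\<^esub> \<otimes>\<^bsub>G\<^esub> u" using nm(4) by simp
      then have "g [^]\<^bsub>G\<^esub> n = \<one>\<^bsub>G\<^esub>" by (rule group.conj_one[OF grp u gp_carr])
      then show False using inforder nm(3) by blast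
    qed
    have "dist (act (inv\<^bsub>G\<^esub> u) a0) x0 = dist (act u x0) a0"
      using act_iso[OF u, of "act (inv\<^bsub>G\<^esub> u) a0" x0] act_inv2[OF u] by (simp add: dist_commute)
    then have H2: "m \<noteq> 0 \<and> inv\<^bsub>G\<^esub> u \<otimes>\<^bsub>G\<^esub> g [^]\<^bsub>G\<^esub> m = g [^]\<^bsub>G\<^esub> n \<otimes>\<^bsub>G\<^esub> inv\<^bsub>G\<^esub> u \<and>
        dist (act (inv\<^bsub>G\<^esub> u) a0) x0 \<le> D'" using m0 e2 nm(5) by simp
    have h2': "\<forall>x\<in>A. \<exists>a\<in>A. dist (act (inv\<^bsub>G\<^esub> u) x) a \<le> C"
      using C[rule_format, OF iu nm(2) nm(1) H2] by blast
    have h2: "\<forall>a\<in>A. \<exists>x\<in>A. dist a (act u x) \<le> C"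
    proof
      fix a assume a: "a \<in> A"
      then obtain a' where a': "a' \<in> A" "dist (act (inv\<^bsub>G\<^esub> u) a) a' \<le> C" using h2' by blast
      have "dist a (act u a') = dist (act (inv\<^bsub>G\<^esub> u) a) a'"
        using act_iso[OF u, of "act (inv\<^bsub>G\<^esub> u) a" a'] act_inv2[OF u] by simp
      then have "dist a (act u a') \<le> C" using a'(2) by linarith
      then show "\<exists>x\<in>A. dist a (act u x) \<le> C" using a'(1) by blast
    qed
    show "HB u \<bar>C\<bar>" unfolding HB_def using h1 h2 by (meson abs_ge_self order_trans)
  qed
  moreover have "\<theta>0 \<ge> 0" unfolding \<theta>0_def using T0 d0 by simp
  moreover have "\<bar>C\<bar> \<ge> 0" by simp
  ultimately show ?thesis by blast
qed

end


context PS begin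

lemma unbdd_proj:
  assumes u: "u \<in> carrier G" and h: "\<forall>x\<in>A. \<exists>a\<in>A. dist (act u x) a \<le> C'"
  shows "\<exists>x\<in>A. \<exists>y\<in>A. dist (\<pi> (act u x)) (\<pi> (act u y)) > R"
proof -
  define E where "E = MM * C' + NN + 2 * \<delta>"
  have near: "dist (act u z) (\<pi> (act u z)) \<le> E" if z: "z \<in> A" for z
  proof -
    obtain a where a: "a \<in> A" "dist (act u z) a \<le> C'" using h z by blast
    show ?thesis unfolding E_def by (rule cstr_near[OF cstr_A a(1) a(2)])
  qed
  obtain i :: int where i: "dist (act (g [^]\<^bsub>G\<^esub> i) bp) bp > R + 2 * E" using unbdd[OF bp_A] by blast
  define x where "x = act (g [^]\<^bsub>G\<^esub> i) bp"
  have xA: "x \<in> A" unfolding x_def by (rule A_pow[OF bp_A])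
  have "dist (act u x) (act u bp) = dist x bp" by (rule act_iso[OF u])
  then have "dist (\<pi> (act u x)) (\<pi> (act u bp)) > R"
    using i[folded x_def] near[OF xA] near[OF bp_A]
      dist_triangle[of "act u x" "act u bp" "\<pi> (act u x)"]
      dist_triangle[of "\<pi> (act u x)" "act u bp" "\<pi> (act u bp)"]
    by (simp add: dist_commute)
  then show ?thesis using xA bp_A by blast
qed

lemma HB_haus: assumes "HB u C" shows "ehausdist (act u ` A) A \<le> ereal C"
  unfolding haus_le
proof
  show "\<forall>x\<in>act u ` A. infdist x A \<le> C"
  proof
    fix b assume "b \<in> act u ` A"
    then obtain x where x: "x \<in> A" "b = act u x" by blast
    then obtain a where "a \<in> A" "dist (act u x) a \<le> C" using assms unfolding HB_def by blast
    then show "infdist b A \<le> C" using x(2) by (intro infdist_le2) auto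
  qed
  show "\<forall>y\<in>A. infdist y (act u ` A) \<le> C"
  proof
    fix a assume "a \<in> A"
    then obtain x where "x \<in> A" "dist a (act u x) \<le> C" using assms unfolding HB_def by blast
    then show "infdist a (act u ` A) \<le> C" by (intro infdist_le2) auto
  qed
qed

lemma HB_inv: assumes v: "v \<in> carrier G" and h: "HB (inv\<^bsub>G\<^esub> v) C" shows "HB v C"
  unfolding HB_def
proof
  show "\<forall>x\<in>A. \<exists>a\<in>A. dist (act v x) a \<le> C"
  proof
    fix x assume "x \<in> A"
    then obtain x' where x': "x' \<in> A" "dist x (act (inv\<^bsub>G\<^esub> v) x') \<le> C" using h unfolding HB_def by blast
    have "dist (act v x) x' = dist x (act (inv\<^bsub>G\<^esub> v) x')"
      using act_iso[OF v, of x "act (inv\<^bsub>G\<^esub> v) x'"] act_inv2[OF v] by simp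
    then have "dist (act v x) x' \<le> C" using x'(2) by linarith
    then show "\<exists>a\<in>A. dist (act v x) a \<le> C" using x'(1) by blast
  qed
  show "\<forall>a\<in>A. \<exists>x\<in>A. dist a (act v x) \<le> C"
  proof
    fix a assume "a \<in> A"
    then obtain a' where a': "a' \<in> A" "dist (act (inv\<^bsub>G\<^esub> v) a) a' \<le> C" using h unfolding HB_def by blast
    have "dist a (act v a') = dist (act (inv\<^bsub>G\<^esub> v) a) a'"
      using act_iso[OF v, of "act (inv\<^bsub>G\<^esub> v) a" a'] act_inv2[OF v] by simp
    then have "dist a (act v a') \<le> C" using a'(2) by linarith
    then show "\<exists>x\<in>A. dist a (act v x) \<le> C" using a'(1) by blast
  qed
qed

lemma haus_to_pt: assumes "\<forall>b\<in>act u ` A. infdist b A \<le> C'"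
  shows "\<forall>x\<in>A. \<exists>a\<in>A. dist (act u x) a \<le> C' + 1"
proof
  fix x assume "x \<in> A"
  then have "infdist (act u x) A < C' + 1" using assms by force
  then obtain a where "a \<in> A" "dist (act u x) a < C' + 1" using infdist_ex[of A] bp_A by blast
  then show "\<exists>a\<in>A. dist (act u x) a \<le> C' + 1" by (meson less_imp_le)
qed

lemma coset_H: "g [^]\<^bsub>G\<^esub> (j::int) <#\<^bsub>G\<^esub> cyclic_subgroup G g = cyclic_subgroup G g"
proof
  show "g [^]\<^bsub>G\<^esub> j <#\<^bsub>G\<^esub> cyclic_subgroup G g \<subseteq> cyclic_subgroup G g"
    unfolding l_coset_def cyclic_subgroup_def using gp_add by blast
  show "cyclic_subgroup G g \<subseteq> g [^]\<^bsub>G\<^esub> j <#\<^bsub>G\<^esub> cyclic_subgroup G g"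
  proof
    fix k assume "k \<in> cyclic_subgroup G g"
    then obtain i :: int where i: "k = g [^]\<^bsub>G\<^esub> i" unfolding cyclic_subgroup_def by blast
    have "k = g [^]\<^bsub>G\<^esub> j \<otimes>\<^bsub>G\<^esub> g [^]\<^bsub>G\<^esub> (i - j)" using i gp_add[of j "i - j"] by simp
    moreover have "g [^]\<^bsub>G\<^esub> (i - j) \<in> cyclic_subgroup G g" unfolding cyclic_subgroup_def by blast
    ultimately show "k \<in> g [^]\<^bsub>G\<^esub> j <#\<^bsub>G\<^esub> cyclic_subgroup G g" unfolding l_coset_def by blast
  qed
qed

lemma H_sub: "cyclic_subgroup G g \<subseteq> carrier G" unfolding cyclic_subgroup_def by auto

end


context PS begin

lemma final:
  assumes rep: "representatives G act A R"
  shows "\<exists>\<theta>::real. \<theta> \<ge> 1 \<and>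
    (\<forall>u\<in>carrier G.
       max (ediam (transl_map G act A R \<pi> u ` A)) (ediam (\<pi> ` act u ` A)) > ereal \<theta>
       \<longleftrightarrow> ehausdist (act u ` A) A \<le> ereal \<theta>) \<and>
    elementary_closure G act A = {u\<in>carrier G. ehausdist (act u ` A) A \<le> ereal \<theta>} \<and>
    index_le G (elementary_closure G act A) (cyclic_subgroup G g) \<theta>"
proof -
  obtain \<theta>0 C0 where tc: "\<theta>0 \<ge> 0" "C0 \<ge> 0"
    "\<forall>u\<in>carrier G. \<forall>x\<in>A. \<forall>y\<in>A. dist (\<pi> (act u x)) (\<pi> (act u y)) > \<theta>0 \<longrightarrow> HB u C0"
    using main_bound by (elim exE conjE) (rule that)
  have MB: "HB u C0" if "u \<in> carrier G" "x \<in> A" "y \<in> A" "dist (\<pi> (act u x)) (\<pi> (act u y)) > \<theta>0" for u x y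
    using tc(3) that by blast
  define F1 where "F1 = {w\<in>carrier G. dist bp (act w bp) \<le> C0 + \<delta>}"
  have fF1: "finite F1" unfolding F1_def by (rule proper)
  define \<theta> where "\<theta> = max 1 (max \<theta>0 (max C0 (real (card F1))))"
  have th: "\<theta> \<ge> 1" "\<theta> \<ge> \<theta>0" "\<theta> \<ge> C0" "\<theta> \<ge> real (card F1)" unfolding \<theta>_def by auto
  have FIN: "HB u C0" if u: "u \<in> carrier G" and f: "ehausdist (act u ` A) A < \<infinity>" for u
  proof -
    obtain C' where "\<forall>b\<in>act u ` A. infdist b A \<le> C'" using haus_fin[OF f] by blast
    then have "\<forall>x\<in>A. \<exists>a\<in>A. dist (act u x) a \<le> C' + 1" by (rule haus_to_pt)
    then obtain x y where "x \<in> A" "y \<in> A" "dist (\<pi> (act u x)) (\<pi> (act u y)) > \<theta>0"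
      using unbdd_proj[OF u] by blast
    then show ?thesis by (rule MB[OF u])
  qed
  have HBth: "ehausdist (act u ` A) A \<le> ereal \<theta>" if "HB u C0" for u
  proof -
    have "ehausdist (act u ` A) A \<le> ereal C0" by (rule HB_haus[OF that])
    also have "\<dots> \<le> ereal \<theta>" using th(3) by simp
    finally show ?thesis .
  qed
  have II: "elementary_closure G act A = {u\<in>carrier G. ehausdist (act u ` A) A \<le> ereal \<theta>}"
  proof (rule equalityI; rule subsetI)
    fix u assume "u \<in> elementary_closure G act A"
    then have u: "u \<in> carrier G" and f: "ehausdist (act u ` A) A < \<infinity>"
      unfolding elementary_closure_def by auto
    show "u \<in> {u\<in>carrier G. ehausdist (act u ` A) A \<le> ereal \<theta>}" using HBth[OF FIN[OF u f]] u by simp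
  next
    fix u assume "u \<in> {u\<in>carrier G. ehausdist (act u ` A) A \<le> ereal \<theta>}"
    then have u: "u \<in> carrier G" and f: "ehausdist (act u ` A) A \<le> ereal \<theta>" by auto
    have "ehausdist (act u ` A) A < \<infinity>" using f by (rule order.strict_trans1) simp
    then show "u \<in> elementary_closure G act A" unfolding elementary_closure_def using u by simp
  qed
  have RC: "R \<subseteq> carrier G" using rep unfolding representatives_def by blast
  have I: "max (ediam (transl_map G act A R \<pi> u ` A)) (ediam (\<pi> ` act u ` A)) > ereal \<theta>
       \<longleftrightarrow> ehausdist (act u ` A) A \<le> ereal \<theta>" if u: "u \<in> carrier G" for u
  proof -
    define r where "r = rep_of G act A R u"
    have ex1: "\<exists>!r. r \<in> R \<and> act r ` A = act u ` A" using rep u unfolding representatives_def by blast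
    have rr: "r \<in> R \<and> act r ` A = act u ` A" unfolding r_def rep_of_def by (rule theI'[OF ex1])
    have rc: "r \<in> carrier G" using rr RC by blast
    have ri: "inv\<^bsub>G\<^esub> r \<in> carrier G" by (rule group.inv_closed[OF grp rc])
    have tm: "transl_map G act A R \<pi> u = (\<lambda>x. act r (\<pi> (act (inv\<^bsub>G\<^esub> r) x)))"
      by (rule ext) (simp add: transl_map_def Let_def r_def)
    show ?thesis
    proof
      assume "max (ediam (transl_map G act A R \<pi> u ` A)) (ediam (\<pi> ` act u ` A)) > ereal \<theta>"
      then have "ereal \<theta> < ediam (transl_map G act A R \<pi> u ` A) \<or> ereal \<theta> < ediam (\<pi> ` act u ` A)"
        by (simp add: less_max_iff_disj)
      then show "ehausdist (act u ` A) A \<le> ereal \<theta>"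
      proof
        assume "ereal \<theta> < ediam (transl_map G act A R \<pi> u ` A)"
        then obtain x y where xy: "x \<in> A" "y \<in> A"
          "\<theta> < dist (act r (\<pi> (act (inv\<^bsub>G\<^esub> r) x))) (act r (\<pi> (act (inv\<^bsub>G\<^esub> r) y)))"
          unfolding ediam_gt tm by blast
        then have "\<theta>0 < dist (\<pi> (act (inv\<^bsub>G\<^esub> r) x)) (\<pi> (act (inv\<^bsub>G\<^esub> r) y))"
          using th(2) act_iso[OF rc] by simp
        then have "HB (inv\<^bsub>G\<^esub> r) C0" using MB[OF ri xy(1,2)] by blast
        then have "HB r C0" by (rule HB_inv[OF rc])
        then have "ehausdist (act r ` A) A \<le> ereal \<theta>" by (rule HBth)
        then show ?thesis using rr by simp
      next
        assume "ereal \<theta> < ediam (\<pi> ` act u ` A)"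
        then obtain x y where xy: "x \<in> A" "y \<in> A" "\<theta> < dist (\<pi> (act u x)) (\<pi> (act u y))"
          unfolding ediam_gt by blast
        then have "HB u C0" using MB[OF u xy(1,2)] th(2) by simp
        then show ?thesis by (rule HBth)
      qed
    next
      assume "ehausdist (act u ` A) A \<le> ereal \<theta>"
      then have "\<forall>b\<in>act u ` A. infdist b A \<le> \<theta>" unfolding haus_le by blast
      then have "\<forall>x\<in>A. \<exists>a\<in>A. dist (act u x) a \<le> \<theta> + 1" by (rule haus_to_pt)
      then obtain x y where xy: "x \<in> A" "y \<in> A" "dist (\<pi> (act u x)) (\<pi> (act u y)) > \<theta>"
        using unbdd_proj[OF u] by blast
      then have "ereal \<theta> < ediam (\<pi> ` act u ` A)" unfolding ediam_gt by blast
      then show "max (ediam (transl_map G act A R \<pi> u ` A)) (ediam (\<pi> ` act u ` A)) > ereal \<theta>"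
        by (simp add: less_max_iff_disj)
    qed
  qed
  define H where "H = cyclic_subgroup G g"
  define S where "S = {u <#\<^bsub>G\<^esub> H | u. u \<in> elementary_closure G act A}"
  have SF: "S \<subseteq> (\<lambda>w. w <#\<^bsub>G\<^esub> H) ` F1"
  proof
    fix c assume "c \<in> S"
    then obtain u where cu: "c = u <#\<^bsub>G\<^esub> H" and uE: "u \<in> elementary_closure G act A" unfolding S_def by blast
    then have u: "u \<in> carrier G" and f: "ehausdist (act u ` A) A < \<infinity>"
      unfolding elementary_closure_def by auto
    have "HB u C0" by (rule FIN[OF u f])
    then obtain x where x: "x \<in> A" "dist bp (act u x) \<le> C0" using bp_A unfolding HB_def by blast
    obtain j :: int where j: "dist x (act (g [^]\<^bsub>G\<^esub> j) bp) \<le> \<delta>" using cobdd[OF x(1) bp_A] by blast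
    define w where "w = u \<otimes>\<^bsub>G\<^esub> g [^]\<^bsub>G\<^esub> j"
    have wc: "w \<in> carrier G" unfolding w_def by (rule monoid.m_closed[OF group.is_monoid[OF grp] u gp_carr])
    have wa: "act w bp = act u (act (g [^]\<^bsub>G\<^esub> j) bp)" unfolding w_def by (rule act_mult[OF u gp_carr])
    have "dist (act u x) (act u (act (g [^]\<^bsub>G\<^esub> j) bp)) \<le> \<delta>" using j act_iso[OF u] by simp
    then have "dist bp (act w bp) \<le> C0 + \<delta>" unfolding wa
      using x(2) dist_triangle[of bp "act u (act (g [^]\<^bsub>G\<^esub> j) bp)" "act u x"] by linarith
    then have wF: "w \<in> F1" unfolding F1_def using wc by blast
    have "w <#\<^bsub>G\<^esub> H = u <#\<^bsub>G\<^esub> (g [^]\<^bsub>G\<^esub> j <#\<^bsub>G\<^esub> H)"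
      unfolding w_def H_def by (rule group.lcos_m_assoc[OF grp H_sub u gp_carr, symmetric])
    also have "\<dots> = u <#\<^bsub>G\<^esub> H" unfolding H_def by (simp only: coset_H)
    finally show "c \<in> (\<lambda>w. w <#\<^bsub>G\<^esub> H) ` F1" using cu wF by blast
  qed
  have fS: "finite S" using SF fF1 finite_subset by blast
  have "card S \<le> card ((\<lambda>w. w <#\<^bsub>G\<^esub> H) ` F1)" using SF fF1 by (intro card_mono) auto
  also have "\<dots> \<le> card F1" by (rule card_image_le[OF fF1])
  finally have "real (card S) \<le> \<theta>" using th(4) by linarith
  then have III: "index_le G (elementary_closure G act A) (cyclic_subgroup G g) \<theta>"
    unfolding index_le_def using fS unfolding S_def H_def by blast
  show ?thesis using th(1) I II III by blast
qed

end

theorem mainTheorem15: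
  fixes G :: "('g, 'b) monoid_scheme"
    and act :: "'g \<Rightarrow> 'a::metric_space \<Rightarrow> 'a"
    and \<Gamma> :: "'a path_t set"
    and \<mu> \<nu> \<delta> :: real and g :: 'g and A :: "'a set" and \<pi> :: "'a \<Rightarrow> 'a" and R :: "'g set"
  assumes "path_system_group \<mu> \<nu> G act \<Gamma>"
    and "constricting_element G act \<Gamma> \<delta> g A \<pi>"
    and "representatives G act A R"
  shows "\<exists>\<theta>::real. \<theta> \<ge> 1 \<and>
    (\<forall>u\<in>carrier G.
       max (ediam (transl_map G act A R \<pi> u ` A)) (ediam (\<pi> ` act u ` A)) > ereal \<theta>
       \<longleftrightarrow> ehausdist (act u ` A) A \<le> ereal \<theta>) \<and>
    elementary_closure G act A = {u\<in>carrier G. ehausdist (act u ` A) A \<le> ereal \<theta>} \<and>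
    index_le G (elementary_closure G act A) (cyclic_subgroup G g) \<theta>"
  using PS.final[OF PS.intro[OF assms(1) assms(2)] assms(3)] .

end
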